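(* Let $A=(Q,\Sigma,T,q_0,Q_a,Q_r,\delta)$ be a simplified QPA-structure with reduced transition function $\varphi$. Then its evolution operator $U_A$ is unitary if and only if all the following hold: (1) for all $(q_1,\sigma_1,\tau_1)\in Q\times\Gamma\times\Delta$: $\sum_{(q,\omega)\in Q\times\Delta^*}|\varphi(q_1,\sigma_1,\tau_1,q,\omega)|^2=1$; (2) for all triples $(q_1,\sigma_1,\tau_1)\ne(q_2,\sigma_1,\tau_2)$ in $Q\times\Gamma\times\Delta$: $\sum_{(q,\omega)\in Q\times\Delta^*}\varphi^*(q_1,\sigma_1,\tau_1,q,\omega)\varphi(q_2,\sigma_1,\tau_2,q,\omega)=0$; (3) for all $(q_1,\sigma_1,\tau_1,\tau_2)\in Q\times\Gamma\times\Delta^2$: $\sum_{(q,\tau,\omega)\in Q\times\Delta\times\{\varepsilon,\tau_2,\tau_1\tau_2\}}|\varphi(q,\sigma_1,\tau,q_1,\omega)|^2=1$; (4) for all $(q_1,\sigma_1,\tau_1),(q_2,\sigma_1,\tau_2)\in Q\times\Gamma\times\Delta$ and all $\tau_3\in\Delta$: (a) $\sum_{(q,\tau)\in Q\times\Delta}\varphi^*(q_1,\sigma_1,\tau_1,q,\tau)\varphi(q_2,\sigma_1,\tau_2,q,\tau_3\tau)+\sum_{q\in Q}\varphi^*(q_1,\sigma_1,\tau_1,q,\varepsilon)\varphi(q_2,\sigma_1,\tau_2,q,\tau_3)=0$ and (b) $\sum_{q\in Q}\varphi^*(q_1,\sigma_1,\tau_1,q,\varepsilon)\varphi(q_2,\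sigma_1,\tau_2,q,\tau_2\tau_3)=0$.
   Context: $z^*$ is complex conjugate, $\varepsilon$ the empty word; an operator $U$ is unitary if $UU^*=U^*U=I$. A QPA-structure is a tuple $A=(Q,\Sigma,T,q_0,Q_a,Q_r,\delta)$ with $Q$ a finite set of states, $\Sigma$ a finite input alphabet, $T$ a finite stack alphabet, $q_0\in Q$, $Q_a,Q_r\subset Q$ disjoint, $\Gamma=\Sigma\cup\{\#,\$\}$ (end-markers not in $\Sigma$), $\Delta=T\cup\{Z_0\}$ ($Z_0\notin T$), and $\delta:Q\times\Gamma\times\Delta\times Q\times\{\downarrow,\to\}\times\Delta^*\to\mathbb{C}$ with values of modulus at most $1$, such that whenever $\delta(q,\alpha,\beta,q',d,\omega)\ne0$: $|\omega|\le2$; if $|\omega|=2$ then $\omega_1=\beta$; if $\beta=Z_0$ then $\omega\in Z_0T^*$; if $\beta\ne Z_0$ then $\omega\in T^*$. A configuration is $|\nu_i q_j\nu_k,\omega_l\rangle$ with $q_j\in Q$, $\nu_i\nu_k\in\#\Sigma^*\$$, input head on the first symbol of $\nu_k$, $\omega_l\in Z_0T^*$ the stack with head on its last symbol; $C$ is the set of configurations, $H_A=\ell_2(C)$. The evolution operator is defined on basis vectors: for $c=|\nu_i q_j\sigma\nu_k,\omega_l\tau\rangle$, $U_A|c\rangle=\sum_{(q,d,\omega)}\delta(q_j,\sigma,\tau,q,d,\omega)|f(c,d,q),\omega_l\omega\rangle$, where $f(c,\downarrow,q)=\nu_i q\sigma\nu_k$, $f(c,\to,q)=\nu_i\sigma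 q\nu_k$. The QPA-structure is simplified if there is a function $D:Q\to\{\downarrow,\to\}$ such that $\delta(q_1,\sigma,\tau,q,d,\omega)=0$ whenever $D(q)\ne d$; its reduced transition function is $\varphi(q_1,\sigma,\tau,q,\omega)=\delta(q_1,\sigma,\tau,q,D(q),\omega)$. *)

theory Defs
  imports "HOL-Analysis.Analysis"
begin

text \<open>Tape symbols Gamma = Sigma plus the end-markers # (LEnd) and $ (REnd).
  Stack symbols Delta = T plus Z0, rendered as 't option with None = Z0.\<close>

datatype 'a tsym = LEnd | REnd | Inp 'a

datatype dir = Stay | Right

definition gamma_set :: "'a set \<Rightarrow> 'a tsym set" where
  "gamma_set Sig = {LEnd, REnd} \<union> Inp ` Sig"

definition delta_set :: "'t set \<Rightarrow> 't option set" where
  "delta_set T = insert None (Some ` T)"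

definition Z0T_star :: "'t set \<Rightarrow> 't option list set" where
  "Z0T_star T = {s. s \<noteq> [] \<and> hd s = None \<and> tl s \<in> lists (Some ` T)}"

type_synonym ('q, 'a, 't) trans =
  "'q \<Rightarrow> 'a tsym \<Rightarrow> 't option \<Rightarrow> 'q \<Rightarrow> dir \<Rightarrow> 't option list \<Rightarrow> complex"

definition qpa_structure ::
  "'q set \<Rightarrow> 'a set \<Rightarrow> 't set \<Rightarrow> 'q \<Rightarrow> 'q set \<Rightarrow> 'q set \<Rightarrow> ('q, 'a, 't) trans \<Rightarrow> bool" where
  "qpa_structure Q Sig T q0 Qa Qr \<delta> \<longleftrightarrow>
     finite Q \<and> finite Sig \<and> finite T \<and> q0 \<in> Q \<and> Qa \<subseteq> Q \<and> Qr \<subseteq> Q \<and> Qa \<inter> Qr = {} \<and>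
     (\<forall>q\<in>Q. \<forall>\<alpha>\<in>gamma_set Sig. \<forall>\<beta>\<in>delta_set T. \<forall>q'\<in>Q. \<forall>d. \<forall>\<omega>\<in>lists (delta_set T).
        cmod (\<delta> q \<alpha> \<beta> q' d \<omega>) \<le> 1 \<and>
        (\<delta> q \<alpha> \<beta> q' d \<omega> \<noteq> 0 \<longrightarrow>
           length \<omega> \<le> 2 \<and>
           (length \<omega> = 2 \<longrightarrow> \<omega> ! 0 = \<beta>) \<and>
           (\<beta> = None \<longrightarrow> \<omega> \<in> Z0T_star T) \<and>
           (\<beta> \<noteq> None \<longrightarrow> \<omega> \<in> lists (Some ` T))))"

text \<open>Configurations: (input word w, head position p on the tape # w $, state, stack).
  The stack is a list whose last element is the stack head.\<close>
type_synonym ('q, 'a, 't) config = "'a list \<times> nat \<times> 'q \<times> 't option list"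

definition configs :: "'q set \<Rightarrow> 'a set \<Rightarrow> 't set \<Rightarrow> ('q, 'a, 't) config set" where
  "configs Q Sig T = {(w, p, q, s). w \<in> lists Sig \<and> p < length w + 2 \<and> q \<in> Q \<and> s \<in> Z0T_star T}"

definition tape :: "'a list \<Rightarrow> 'a tsym list" where
  "tape w = LEnd # map Inp w @ [REnd]"

text \<open>Head movement; the tape is read circularly (moving right from $ returns to #).\<close>
definition move :: "'a list \<Rightarrow> nat \<Rightarrow> dir \<Rightarrow> nat" where
  "move w p d = (case d of Stay \<Rightarrow> p | Right \<Rightarrow> Suc p mod (length w + 2))"

text \<open>Matrix entry: coefficient of basis vector c' in U_A applied to basis vector c.\<close>
definition evol_amp ::
  "'q set \<Rightarrow> 't set \<Rightarrow> ('q, 'a, 't) trans \<Rightarrow> ('q, 'a, 't) config \<Rightarrow> ('q, 'a, 't) config \<Rightarrow> complex" where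
  "evol_amp Q T \<delta> c c' = (case c of (w, p, q1, s) \<Rightarrow>
     infsum (\<lambda>(q, d, \<omega>). if c' = (w, move w p d, q, butlast s @ \<omega>)
                          then \<delta> q1 (tape w ! p) (last s) q d \<omega> else 0)
            (Q \<times> UNIV \<times> lists (delta_set T)))"

definition l2 :: "'c set \<Rightarrow> ('c \<Rightarrow> complex) set" where
  "l2 C = {x. (\<forall>c. c \<notin> C \<longrightarrow> x c = 0) \<and> (\<lambda>c. (cmod (x c))\<^sup>2) summable_on C}"

definition ip :: "'c set \<Rightarrow> ('c \<Rightarrow> complex) \<Rightarrow> ('c \<Rightarrow> complex) \<Rightarrow> complex" where
  "ip C x y = infsum (\<lambda>c. cnj (x c) * y c) C"

definition evol_op ::
  "'q set \<Rightarrow> 'a set \<Rightarrow> 't set \<Rightarrow> ('q, 'a, 't) trans \<Rightarrow>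
   (('q, 'a, 't) config \<Rightarrow> complex) \<Rightarrow> (('q, 'a, 't) config \<Rightarrow> complex)" where
  "evol_op Q Sig T \<delta> x = (\<lambda>c'. if c' \<in> configs Q Sig T
      then infsum (\<lambda>c. x c * evol_amp Q T \<delta> c c') (configs Q Sig T) else 0)"

definition unitary_on ::
  "('c \<Rightarrow> complex) set \<Rightarrow> (('c \<Rightarrow> complex) \<Rightarrow> ('c \<Rightarrow> complex) \<Rightarrow> complex) \<Rightarrow>
   (('c \<Rightarrow> complex) \<Rightarrow> ('c \<Rightarrow> complex)) \<Rightarrow> bool" where
  "unitary_on H ipr U \<longleftrightarrow> (\<forall>x\<in>H. U x \<in> H) \<and>
     (\<exists>V. (\<forall>y\<in>H. V y \<in> H) \<and> (\<forall>x\<in>H. \<forall>y\<in>H. ipr (U x) y = ipr x (V y)) \<and>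
          (\<forall>x\<in>H. V (U x) = x) \<and> (\<forall>x\<in>H. U (V x) = x))"

definition qpa_simplified ::
  "'q set \<Rightarrow> 'a set \<Rightarrow> 't set \<Rightarrow> ('q, 'a, 't) trans \<Rightarrow> ('q \<Rightarrow> dir) \<Rightarrow> bool" where
  "qpa_simplified Q Sig T \<delta> D \<longleftrightarrow>
     (\<forall>q1\<in>Q. \<forall>\<sigma>\<in>gamma_set Sig. \<forall>\<tau>\<in>delta_set T. \<forall>q\<in>Q. \<forall>d. \<forall>\<omega>\<in>lists (delta_set T).
        D q \<noteq> d \<longrightarrow> \<delta> q1 \<sigma> \<tau> q d \<omega> = 0)"

definition reduced_trans ::
  "('q, 'a, 't) trans \<Rightarrow> ('q \<Rightarrow> dir) \<Rightarrow> 'q \<Rightarrow> 'a tsym \<Rightarrow> 't option \<Rightarrow> 'q \<Rightarrow> 't option list \<Rightarrow> complex" where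
  "reduced_trans \<delta> D q1 \<sigma> \<tau> q \<omega> = \<delta> q1 \<sigma> \<tau> q (D q) \<omega>"

end

theory Submission
  imports Defs
begin

lemma l2_bound_lemma:
  fixes m :: "'c \<Rightarrow> 'c \<Rightarrow> complex" and S :: "'c \<Rightarrow> 'c set" and K :: nat
  assumes S_sub: "\<And>j. j \<in> C \<Longrightarrow> S j \<subseteq> C"
    and S_fin: "\<And>j. j \<in> C \<Longrightarrow> finite (S j)"
    and S_card: "\<And>j. j \<in> C \<Longrightarrow> card (S j) \<le> K"
    and inv_fin: "\<And>i. i \<in> C \<Longrightarrow> finite {j\<in>C. i \<in> S j}"
    and inv_card: "\<And>i. i \<in> C \<Longrightarrow> card {j\<in>C. i \<in> S j} \<le> K"
    and bnd: "\<And>i j. i \<in> C \<Longrightarrow> j \<in> C \<Longrightarrow> cmod (m i j) \<le> 1"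
    and x: "x \<in> l2 C"
  shows "(\<lambda>j. if j \<in> C then (\<Sum>i\<in>S j. x i * m i j) else 0) \<in> l2 C"
proof -
  define g where "g = (\<lambda>i. (cmod (x i))\<^sup>2)"
  define N where "N = infsum g C"
  have gs: "g summable_on C" using x by (simp add: l2_def g_def)
  have g0: "g i \<ge> 0" for i by (simp add: g_def)
  have bound: "(\<Sum>j\<in>F. (cmod (if j \<in> C then (\<Sum>i\<in>S j. x i * m i j) else 0))\<^sup>2) \<le> real K * real K * N"
    if F: "F \<subseteq> C" "finite F" for F
  proof -
    have "(\<Sum>j\<in>F. (cmod (if j \<in> C then (\<Sum>i\<in>S j. x i * m i j) else 0))\<^sup>2)
        \<le> (\<Sum>j\<in>F. (\<Sum>i\<in>S j. g i) * real K)"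
    proof (rule sum_mono)
      fix j assume j: "j \<in> F"
      then have jC: "j \<in> C" using F by auto
      have "cmod (\<Sum>i\<in>S j. x i * m i j) \<le> (\<Sum>i\<in>S j. cmod (x i * m i j))"
        by (rule norm_sum)
      also have "\<dots> \<le> (\<Sum>i\<in>S j. cmod (x i))"
      proof (rule sum_mono)
        fix i assume "i \<in> S j"
        then have "i \<in> C" using S_sub jC by auto
        then have "cmod (m i j) \<le> 1" using bnd jC by auto
        then show "cmod (x i * m i j) \<le> cmod (x i)"
          by (simp add: norm_mult mult_left_le)
      qed
      finally have "(cmod (\<Sum>i\<in>S j. x i * m i j))\<^sup>2 \<le> (\<Sum>i\<in>S j. cmod (x i))\<^sup>2"
        by (simp add: power_mono)
      also have "\<dots> \<le> (\<Sum>i\<in>S j. (cmod (x i))\<^sup>2) * card (S j)"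
        by (rule sum_squared_le_sum_of_squares)
      also have "\<dots> \<le> (\<Sum>i\<in>S j. g i) * real K"
        using S_card[OF jC] unfolding g_def by (intro mult_left_mono) (auto intro: sum_nonneg)
      finally show "(cmod (if j \<in> C then (\<Sum>i\<in>S j. x i * m i j) else 0))\<^sup>2 \<le> (\<Sum>i\<in>S j. g i) * real K"
        using jC by simp
    qed
    also have "\<dots> = real K * (\<Sum>j\<in>F. (\<Sum>i\<in>S j. g i))"
      by (simp add: sum_distrib_left mult.commute)
    also have "(\<Sum>j\<in>F. (\<Sum>i\<in>S j. g i)) \<le> real K * N"
    proof -
      define G where "G = \<Union> (S ` F)"
      have Gfin: "finite G" using F S_fin by (auto simp: G_def)
      have GC: "G \<subseteq> C" using F S_sub by (auto simp: G_def)
      have "(\<Sum>j\<in>F. (\<Sum>i\<in>S j. g i)) = (\<Sum>j\<in>F. (\<Sum>i\<in>G. if i \<in> S j then g i else 0))"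
      proof (rule sum.cong[OF refl])
        fix j assume "j \<in> F"
        then have "S j \<subseteq> G" by (auto simp: G_def)
        then show "(\<Sum>i\<in>S j. g i) = (\<Sum>i\<in>G. if i \<in> S j then g i else 0)"
          using Gfin by (simp add: sum.If_cases Int_absorb1 Int_commute)
      qed
      also have "\<dots> = (\<Sum>i\<in>G. (\<Sum>j\<in>F. if i \<in> S j then g i else 0))"
        by (rule sum.swap)
      also have "\<dots> = (\<Sum>i\<in>G. g i * card {j\<in>F. i \<in> S j})"
        using F by (simp add: sum.If_cases mult.commute) (simp add: Int_def conj_commute)
      also have "\<dots> \<le> (\<Sum>i\<in>G. g i * real K)"
      proof (rule sum_mono)
        fix i assume "i \<in> G"
        then have iC: "i \<in> C" using GC by auto
        have "card {j\<in>F. i \<in> S j} \<le> card {j\<in>C. i \<in> S j}"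
          using F inv_fin[OF iC] by (intro card_mono) auto
        then have "card {j\<in>F. i \<in> S j} \<le> K" using inv_card[OF iC] by linarith
        then show "g i * card {j\<in>F. i \<in> S j} \<le> g i * real K"
          using g0 by (intro mult_left_mono) auto
      qed
      also have "\<dots> = real K * (\<Sum>i\<in>G. g i)" by (simp add: sum_distrib_left mult.commute)
      also have "(\<Sum>i\<in>G. g i) \<le> N"
        unfolding N_def using gs Gfin GC g0 by (intro finite_sum_le_infsum) auto
      finally show ?thesis by (simp add: mult_left_mono)
    qed
    then have "real K * (\<Sum>j\<in>F. (\<Sum>i\<in>S j. g i)) \<le> real K * (real K * N)"
      by (intro mult_left_mono) auto
    finally show ?thesis by (simp add: mult.assoc)
  qed
  have "(\<lambda>j. (cmod (if j \<in> C then (\<Sum>i\<in>S j. x i * m i j) else 0))\<^sup>2) summable_on C"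
    by (rule nonneg_bdd_above_summable_on) (use bound in \<open>auto intro!: bdd_aboveI2\<close>)
  then show ?thesis unfolding l2_def by auto
qed


lemma infsum_fin_supp:
  assumes "finite S" "S \<subseteq> A" "\<And>x. x \<in> A \<Longrightarrow> x \<notin> S \<Longrightarrow> f x = 0"
  shows "infsum f A = sum f S"
proof -
  have "infsum f A = infsum f S"
    by (rule infsum_cong_neutral) (use assms in auto)
  then show ?thesis using assms by simp
qed

lemma summable_fin_supp:
  assumes "finite S" "S \<subseteq> A" "\<And>x. x \<in> A \<Longrightarrow> x \<notin> S \<Longrightarrow> f x = 0"
  shows "f summable_on A"
proof -
  have "f summable_on A \<longleftrightarrow> f summable_on S"
    by (rule summable_on_cong_neutral) (use assms in auto)
  then show ?thesis using assms by simp
qed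

lemma pair_summable:
  fixes S :: "'c \<Rightarrow> 'd set" and K :: nat
  assumes S_fin: "\<And>i. i \<in> C \<Longrightarrow> finite (S i)"
    and S_card: "\<And>i. i \<in> C \<Longrightarrow> card (S i) \<le> K"
    and x: "x \<in> l2 C"
  shows "(\<lambda>p. (cmod (x (fst p)))\<^sup>2) summable_on Sigma C S"
proof -
  define g where "g = (\<lambda>i. (cmod (x i))\<^sup>2)"
  define N where "N = infsum g C"
  have gs: "g summable_on C" using x by (simp add: l2_def g_def)
  have g0: "g i \<ge> 0" for i by (simp add: g_def)
  have "(\<Sum>p\<in>F. g (fst p)) \<le> real K * N" if F: "F \<subseteq> Sigma C S" "finite F" for F
  proof -
    have fF: "finite (fst ` F)" "fst ` F \<subseteq> C" using F by auto
    have fin2: "finite (Sigma (fst ` F) S)" using fF S_fin by auto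
    have "F \<subseteq> Sigma (fst ` F) S" using F by force
    then have "(\<Sum>p\<in>F. g (fst p)) \<le> (\<Sum>p\<in>Sigma (fst ` F) S. g (fst p))"
      using fin2 g0 by (intro sum_mono2) auto
    also have "\<dots> = (\<Sum>i\<in>fst ` F. \<Sum>j\<in>S i. g i)"
      using fF S_fin by (subst sum.Sigma) (auto simp: case_prod_beta)
    also have "\<dots> = (\<Sum>i\<in>fst ` F. real (card (S i)) * g i)" by simp
    also have "\<dots> \<le> (\<Sum>i\<in>fst ` F. real K * g i)"
      using fF S_card g0 by (intro sum_mono mult_right_mono) auto
    also have "\<dots> = real K * (\<Sum>i\<in>fst ` F. g i)" by (simp add: sum_distrib_left)
    also have "(\<Sum>i\<in>fst ` F. g i) \<le> N"
      unfolding N_def using gs fF g0 by (intro finite_sum_le_infsum) auto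
    finally show ?thesis by (simp add: mult_left_mono)
  qed
  then show ?thesis
    by (intro nonneg_bdd_above_summable_on) (auto simp: g_def intro!: bdd_aboveI2[where M="real K * N"])
qed

locale fmat =
  fixes C :: "'c set" and a :: "'c \<Rightarrow> 'c \<Rightarrow> complex" and K :: nat
  assumes rowC: "\<And>c c'. c \<in> C \<Longrightarrow> a c c' \<noteq> 0 \<Longrightarrow> c' \<in> C"
  and rowfin: "\<And>c. c \<in> C \<Longrightarrow> finite {c'. a c c' \<noteq> 0}"
  and rowK: "\<And>c. c \<in> C \<Longrightarrow> card {c'. a c c' \<noteq> 0} \<le> K"
  and colfin: "\<And>c'. c' \<in> C \<Longrightarrow> finite {c\<in>C. a c c' \<noteq> 0}"
  and colK: "\<And>c'. c' \<in> C \<Longrightarrow> card {c\<in>C. a c c' \<noteq> 0} \<le> K"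
  and bnd: "\<And>c c'. c \<in> C \<Longrightarrow> cmod (a c c') \<le> 1"
begin

definition "Rs c = {c'. a c c' \<noteq> 0}"
definition "Cs c' = {c\<in>C. a c c' \<noteq> 0}"
definition "Uop x = (\<lambda>c'. if c' \<in> C then infsum (\<lambda>c. x c * a c c') C else 0)"
definition "Vop y = (\<lambda>c. if c \<in> C then (\<Sum>c'\<in>Rs c. y c' * cnj (a c c')) else 0)"

lemma Rs_sub: "c \<in> C \<Longrightarrow> Rs c \<subseteq> C" using rowC by (auto simp: Rs_def)
lemma Rs_fin: "c \<in> C \<Longrightarrow> finite (Rs c)" using rowfin by (auto simp: Rs_def)
lemma Cs_sub: "Cs c \<subseteq> C" by (auto simp: Cs_def)
lemma Cs_fin: "c \<in> C \<Longrightarrow> finite (Cs c)" using colfin by (auto simp: Cs_def)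
lemma inv_Cs: "i \<in> C \<Longrightarrow> {j\<in>C. i \<in> Cs j} = Rs i" using rowC by (auto simp: Rs_def Cs_def)
lemma inv_Rs: "j \<in> C \<Longrightarrow> {i\<in>C. j \<in> Rs i} = Cs j" by (auto simp: Rs_def Cs_def)

lemma Uop_fin: "c' \<in> C \<Longrightarrow> Uop x c' = (\<Sum>c\<in>Cs c'. x c * a c c')"
  unfolding Uop_def using Cs_fin Cs_sub by (auto intro!: infsum_fin_supp simp: Cs_def)

lemma Uop_alt: "Uop x = (\<lambda>j. if j \<in> C then (\<Sum>i\<in>Cs j. x i * a i j) else 0)"
  using Uop_fin by (auto simp: Uop_def)

lemma Uop_l2: "x \<in> l2 C \<Longrightarrow> Uop x \<in> l2 C"
  unfolding Uop_alt
  by (rule l2_bound_lemma[where K=K]) (use Cs_sub Cs_fin colK rowK rowfin inv_Cs bnd in \<open>auto simp: Cs_def Rs_def\<close>)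

lemma Vop_l2: "y \<in> l2 C \<Longrightarrow> Vop y \<in> l2 C"
  unfolding Vop_def
  by (rule l2_bound_lemma[where K=K and m="\<lambda>j i. cnj (a i j)"])
     (use Rs_sub Rs_fin colK rowK colfin inv_Rs bnd in \<open>auto simp: Cs_def Rs_def\<close>)

lemma swap_Sigma: "prod.swap ` Sigma C Cs = Sigma C Rs"
  using rowC by (auto simp: Cs_def Rs_def image_iff)

lemma adjoint:
  assumes x: "x \<in> l2 C" and y: "y \<in> l2 C"
  shows "ip C (Uop x) y = ip C x (Vop y)"
proof -
  define g where "g = (\<lambda>(i,j). cnj (x i) * cnj (a i j) * y j)"
  define P where "P = Sigma C Rs"
  have s1: "(\<lambda>p. (cmod (x (fst p)))\<^sup>2) summable_on P"
    unfolding P_def by (rule pair_summable[where K=K]) (use Rs_fin rowK x in \<open>auto simp: Rs_def\<close>)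
  have s2': "(\<lambda>p. (cmod (y (fst p)))\<^sup>2) summable_on Sigma C Cs"
    by (rule pair_summable[where K=K]) (use Cs_fin colK y in \<open>auto simp: Cs_def\<close>)
  have "(\<lambda>p. (cmod (y (snd p)))\<^sup>2) summable_on (prod.swap ` Sigma C Cs)"
    using s2' by (subst summable_on_reindex) (auto simp: o_def)
  then have s2: "(\<lambda>p. (cmod (y (snd p)))\<^sup>2) summable_on P" unfolding P_def swap_Sigma .
  have hs: "(\<lambda>p. (cmod (x (fst p)))\<^sup>2 + (cmod (y (snd p)))\<^sup>2) summable_on P"
    using s1 s2 by (rule summable_on_add)
  have gs: "g summable_on P"
  proof (rule abs_summable_summable)
    show "(\<lambda>p. norm (g p)) summable_on P"
    proof (rule Infinite_Sum.abs_summable_on_comparison_test)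
      show "(\<lambda>p. norm ((cmod (x (fst p)))\<^sup>2 + (cmod (y (snd p)))\<^sup>2)) summable_on P"
        using summable_on_iff_abs_summable_on_real[THEN iffD1, OF hs] .
      fix p assume "p \<in> P"
      then obtain i j where p: "p = (i,j)" "i \<in> C" by (auto simp: P_def)
      have "cmod (g p) = cmod (x i) * cmod (a i j) * cmod (y j)"
        unfolding g_def p by (simp add: norm_mult)
      also have "\<dots> \<le> cmod (x i) * 1 * cmod (y j)"
        by (intro mult_right_mono mult_left_mono bnd[OF p(2)]) auto
      also have "\<dots> \<le> (cmod (x i))\<^sup>2 + (cmod (y j))\<^sup>2"
        using sum_squares_bound[of "cmod (x i)" "cmod (y j)"]
          mult_nonneg_nonneg[OF norm_ge_zero[of "x i"] norm_ge_zero[of "y j"]] by linarith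
      also have "\<dots> = norm ((cmod (x (fst p)))\<^sup>2 + (cmod (y (snd p)))\<^sup>2)"
        unfolding p by simp
      finally show "norm (g p) \<le> norm ((cmod (x (fst p)))\<^sup>2 + (cmod (y (snd p)))\<^sup>2)" .
    qed
  qed
  have gs': "(\<lambda>(j,i). g (i,j)) summable_on Sigma C Cs"
  proof -
    have "g summable_on (prod.swap ` Sigma C Cs)" using gs unfolding P_def swap_Sigma .
    then have "(\<lambda>x. g (prod.swap x)) summable_on Sigma C Cs"
      by (subst (asm) summable_on_reindex) (auto simp: o_def)
    moreover have "(\<lambda>x. g (prod.swap x)) = (\<lambda>(j,i). g (i,j))" by auto
    ultimately show ?thesis by simp
  qed
  have "ip C (Uop x) y = infsum (\<lambda>j. infsum (\<lambda>i. g (i,j)) (Cs j)) C"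
    unfolding ip_def
  proof (rule infsum_cong)
    fix j assume j: "j \<in> C"
    have "cnj (Uop x j) * y j = (\<Sum>i\<in>Cs j. g (i,j))"
      by (simp add: Uop_fin[OF j] g_def sum_distrib_right)
    then show "cnj (Uop x j) * y j = infsum (\<lambda>i. g (i,j)) (Cs j)"
      using Cs_fin[OF j] by simp
  qed
  also have "\<dots> = infsum (\<lambda>(j,i). g (i,j)) (Sigma C Cs)"
    using infsum_Sigma'_banach[of "\<lambda>j i. g (i,j)" C Cs] gs' by simp
  also have "\<dots> = infsum g (prod.swap ` Sigma C Cs)"
    by (subst infsum_reindex) (auto simp: o_def case_prod_unfold intro!: infsum_cong)
  also have "\<dots> = infsum g P" unfolding P_def swap_Sigma ..
  also have "\<dots> = infsum (\<lambda>i. infsum (\<lambda>j. g (i,j)) (Rs i)) C"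
    using infsum_Sigma'_banach[of "\<lambda>i j. g (i,j)" C Rs] gs unfolding P_def by simp
  also have "\<dots> = ip C x (Vop y)"
    unfolding ip_def
  proof (rule infsum_cong)
    fix i assume i: "i \<in> C"
    have "cnj (x i) * Vop y i = (\<Sum>j\<in>Rs i. g (i,j))"
      by (simp add: Vop_def i g_def sum_distrib_left mult_ac)
    then show "infsum (\<lambda>j. g (i,j)) (Rs i) = cnj (x i) * Vop y i"
      using Rs_fin[OF i] by simp
  qed
  finally show ?thesis .
qed

end

context fmat begin

definition "ev c = (\<lambda>z. if z = c then (1::complex) else 0)"

lemma ev_l2: "c \<in> C \<Longrightarrow> ev c \<in> l2 C"
  unfolding l2_def ev_def
  by (auto intro!: summable_fin_supp[where S="{c}"] split: if_splits)

lemma ip_ev_left: "c \<in> C \<Longrightarrow> ip C (ev c) x = x c"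
  unfolding ip_def ev_def by (subst infsum_fin_supp[where S="{c}"]) auto

lemma ip_ev_right: "c \<in> C \<Longrightarrow> ip C x (ev c) = cnj (x c)"
  unfolding ip_def ev_def by (subst infsum_fin_supp[where S="{c}"]) auto

lemma Uop_ev: "c \<in> C \<Longrightarrow> Uop (ev c) = a c"
proof
  fix c' assume c: "c \<in> C"
  show "Uop (ev c) c' = a c c'"
  proof (cases "c' \<in> C")
    case True
    then show ?thesis unfolding Uop_def ev_def using c
      by (simp, subst infsum_fin_supp[where S="{c}"]) auto
  next
    case False
    then show ?thesis using rowC[OF c, of c'] by (auto simp: Uop_def)
  qed
qed

definition "rows_on \<longleftrightarrow> (\<forall>c1\<in>C. \<forall>c2\<in>C. infsum (\<lambda>c'. cnj (a c1 c') * a c2 c') C = (if c1 = c2 then 1 else 0))"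
definition "cols_on \<longleftrightarrow> (\<forall>c'\<in>C. infsum (\<lambda>c. (cmod (a c c'))\<^sup>2) C = 1)"

lemma unitary_imp:
  assumes "unitary_on (l2 C) (ip C) Uop"
  shows "rows_on" "cols_on"
proof -
  from assms obtain V where V: "\<And>y. y \<in> l2 C \<Longrightarrow> V y \<in> l2 C"
    "\<And>x y. x \<in> l2 C \<Longrightarrow> y \<in> l2 C \<Longrightarrow> ip C (Uop x) y = ip C x (V y)"
    "\<And>x. x \<in> l2 C \<Longrightarrow> V (Uop x) = x" "\<And>x. x \<in> l2 C \<Longrightarrow> Uop (V x) = x"
    and U: "\<And>x. x \<in> l2 C \<Longrightarrow> Uop x \<in> l2 C"
    unfolding unitary_on_def by blast
  show "rows_on" unfolding rows_on_def
  proof (intro ballI)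
    fix c1 c2 assume c: "c1 \<in> C" "c2 \<in> C"
    have "ip C (Uop (ev c1)) (Uop (ev c2)) = ip C (ev c1) (V (Uop (ev c2)))"
      using V(2) U ev_l2 c by blast
    also have "\<dots> = ip C (ev c1) (ev c2)" using V(3) ev_l2 c by simp
    also have "\<dots> = (if c1 = c2 then 1 else 0)" using ip_ev_left[OF c(1)] by (simp add: ev_def)
    finally show "infsum (\<lambda>c'. cnj (a c1 c') * a c2 c') C = (if c1 = c2 then 1 else 0)"
      using Uop_ev c by (simp add: ip_def)
  qed
  show "cols_on" unfolding cols_on_def
  proof
    fix c' assume c': "c' \<in> C"
    define z where "z = V (ev c')"
    have z: "z \<in> l2 C" using V(1) ev_l2 c' by (simp add: z_def)
    have zc: "z c = cnj (a c c')" if c: "c \<in> C" for c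
    proof -
      have "z c = ip C (ev c) z" using ip_ev_left[OF c] by simp
      also have "\<dots> = ip C (Uop (ev c)) (ev c')" unfolding z_def using V(2) ev_l2 c c' by simp
      also have "\<dots> = cnj (a c c')" using Uop_ev[OF c] ip_ev_right[OF c'] by simp
      finally show ?thesis .
    qed
    have "ip C z z = ip C (Uop z) (ev c')" unfolding z_def using V(2) z ev_l2 c' z_def by simp
    also have "\<dots> = 1" unfolding z_def using V(4) ev_l2 c' ip_ev_left[OF c'] by (simp add: ev_def)
    finally have "ip C z z = 1" .
    moreover have "ip C z z = of_real (\<Sum>c\<in>Cs c'. (cmod (a c c'))\<^sup>2)"
    proof -
      have "ip C z z = (\<Sum>c\<in>Cs c'. cnj (z c) * z c)"
        unfolding ip_def using Cs_fin[OF c'] Cs_sub zc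
        by (intro infsum_fin_supp) (auto simp: Cs_def)
      also have "\<dots> = (\<Sum>c\<in>Cs c'. of_real ((cmod (a c c'))\<^sup>2))"
      proof (rule sum.cong[OF refl])
        fix c assume "c \<in> Cs c'"
        then have "c \<in> C" using Cs_sub by auto
        then have "cnj (z c) * z c = a c c' * cnj (a c c')" using zc by simp
        also have "\<dots> = of_real ((cmod (a c c'))\<^sup>2)" by (rule complex_norm_square[symmetric])
        finally show "cnj (z c) * z c = of_real ((cmod (a c c'))\<^sup>2)" .
      qed
      finally show ?thesis by simp
    qed
    ultimately have "(\<Sum>c\<in>Cs c'. (cmod (a c c'))\<^sup>2) = 1" by (metis of_real_eq_1_iff)
    moreover have "infsum (\<lambda>c. (cmod (a c c'))\<^sup>2) C = (\<Sum>c\<in>Cs c'. (cmod (a c c'))\<^sup>2)"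
      using Cs_fin[OF c'] Cs_sub by (intro infsum_fin_supp) (auto simp: Cs_def)
    ultimately show "infsum (\<lambda>c. (cmod (a c c'))\<^sup>2) C = 1" by simp
  qed
qed

end

context fmat begin

lemma row_fin:
  assumes R: rows_on and i: "i \<in> C" and k: "k \<in> C" and J: "finite J" "Rs i \<subseteq> J" "J \<subseteq> C"
  shows "(\<Sum>j\<in>J. cnj (a i j) * a k j) = (if i = k then 1 else 0)"
proof -
  have "infsum (\<lambda>j. cnj (a i j) * a k j) C = (\<Sum>j\<in>J. cnj (a i j) * a k j)"
    using J by (intro infsum_fin_supp) (auto simp: Rs_def)
  then show ?thesis using R i k unfolding rows_on_def by auto
qed

lemma row_nonempty:
  assumes R: rows_on and i: "i \<in> C" shows "Rs i \<noteq> {}"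
  using row_fin[OF R i i, of "{}"] by auto

lemma col_nonempty:
  assumes Cl: cols_on and j: "j \<in> C" shows "Cs j \<noteq> {}"
proof
  assume e: "Cs j = {}"
  have "infsum (\<lambda>c. (cmod (a c j))\<^sup>2) C = (\<Sum>c\<in>{}. (cmod (a c j))\<^sup>2)"
    using e by (intro infsum_fin_supp) (auto simp: Cs_def)
  then show False using Cl j unfolding cols_on_def by auto
qed

lemma col_orth0:
  assumes R: rows_on and Cl: cols_on and l: "l \<in> C" and j: "j \<in> C"
  shows "(\<Sum>i\<in>Cs l. cnj (a i l) * a i j) = (if l = j then 1 else 0)"
proof -
  define I0 where "I0 = Cs l"
  define u where "u = (\<lambda>j. \<Sum>i\<in>I0. cnj (a i l) * a i j)"
  define J where "J = \<Union> (Rs ` I0)"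
  have I0f: "finite I0" "I0 \<subseteq> C" using Cs_fin[OF l] Cs_sub by (auto simp: I0_def)
  have Jf: "finite J" "J \<subseteq> C" using I0f Rs_fin Rs_sub by (auto simp: J_def)
  have norm1: "(\<Sum>i\<in>I0. (cmod (a i l))\<^sup>2) = 1"
  proof -
    have "infsum (\<lambda>c. (cmod (a c l))\<^sup>2) C = (\<Sum>i\<in>I0. (cmod (a i l))\<^sup>2)"
      using I0f by (intro infsum_fin_supp) (auto simp: I0_def Cs_def)
    then show ?thesis using Cl l unfolding cols_on_def by auto
  qed
  have sq: "cnj z * z = of_real ((cmod z)\<^sup>2)" for z
    by (subst mult.commute) (rule complex_norm_square[symmetric])
  have ul: "u l = 1"
  proof -
    have "u l = (\<Sum>i\<in>I0. of_real ((cmod (a i l))\<^sup>2))" unfolding u_def using sq by simp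
    also have "\<dots> = of_real (\<Sum>i\<in>I0. (cmod (a i l))\<^sup>2)" by simp
    finally show ?thesis using norm1 by simp
  qed
  have lJ: "l \<in> J"
  proof -
    obtain i where "i \<in> Cs l" using col_nonempty[OF Cl l] by auto
    then show ?thesis by (auto simp: J_def I0_def Rs_def Cs_def)
  qed
  have "(\<Sum>j\<in>J. cnj (u j) * u j) = (\<Sum>j\<in>J. \<Sum>k\<in>I0. \<Sum>i\<in>I0. (a i l * cnj (a k l)) * (cnj (a i j) * a k j))"
    unfolding u_def by (simp add: cnj_sum sum_product mult_ac)
  also have "\<dots> = (\<Sum>j\<in>J. \<Sum>i\<in>I0. \<Sum>k\<in>I0. (a i l * cnj (a k l)) * (cnj (a i j) * a k j))"
    by (rule sum.cong[OF refl], rule sum.swap)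
  also have "\<dots> = (\<Sum>i\<in>I0. \<Sum>j\<in>J. \<Sum>k\<in>I0. (a i l * cnj (a k l)) * (cnj (a i j) * a k j))"
    by (rule sum.swap)
  also have "\<dots> = (\<Sum>i\<in>I0. \<Sum>k\<in>I0. \<Sum>j\<in>J. (a i l * cnj (a k l)) * (cnj (a i j) * a k j))"
    by (intro sum.cong refl sum.swap)
  also have "\<dots> = (\<Sum>i\<in>I0. \<Sum>k\<in>I0. (a i l * cnj (a k l)) * (if i = k then 1 else 0))"
  proof (intro sum.cong refl)
    fix i k assume ik: "i \<in> I0" "k \<in> I0"
    have "Rs i \<subseteq> J" using ik by (auto simp: J_def)
    then have "(\<Sum>j\<in>J. cnj (a i j) * a k j) = (if i = k then 1 else 0)"
      using row_fin[OF R _ _ Jf(1) _ Jf(2), of i k] ik I0f by blast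
    then show "(\<Sum>j\<in>J. (a i l * cnj (a k l)) * (cnj (a i j) * a k j)) = (a i l * cnj (a k l)) * (if i = k then 1 else 0)"
      by (simp only: sum_distrib_left[symmetric])
  qed
  also have "\<dots> = (\<Sum>i\<in>I0. a i l * cnj (a i l))"
    using I0f by (simp add: if_distrib cong: if_cong)
  also have "\<dots> = (\<Sum>i\<in>I0. of_real ((cmod (a i l))\<^sup>2))" using sq by (simp add: mult.commute)
  also have "\<dots> = 1" unfolding of_real_sum[symmetric] norm1 by simp
  finally have "(\<Sum>j\<in>J. cnj (u j) * u j) = 1" .
  then have "(\<Sum>j\<in>J. of_real ((cmod (u j))\<^sup>2)) = (1::complex)" using sq by simp
  then have n1: "(\<Sum>j\<in>J. (cmod (u j))\<^sup>2) = 1" by (metis of_real_eq_1_iff of_real_sum)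
  have "(\<Sum>j\<in>J. (cmod (u j))\<^sup>2) = (cmod (u l))\<^sup>2 + (\<Sum>j\<in>J-{l}. (cmod (u j))\<^sup>2)"
    using Jf lJ by (simp add: sum.remove)
  then have "(\<Sum>j\<in>J-{l}. (cmod (u j))\<^sup>2) = 0" using n1 ul by simp
  then have z: "\<And>j. j \<in> J - {l} \<Longrightarrow> u j = 0"
    using Jf by (subst (asm) sum_nonneg_eq_0_iff) auto
  have "u j = (if l = j then 1 else 0)"
  proof (cases "j = l")
    case True then show ?thesis using ul by simp
  next
    case False
    show ?thesis
    proof (cases "j \<in> J")
      case True then show ?thesis using z False by auto
    next
      case nJ: False
      have "a i j = 0" if "i \<in> I0" for i using nJ that by (auto simp: J_def Rs_def)
      then show ?thesis using False by (simp add: u_def)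
    qed
  qed
  then show ?thesis by (simp add: u_def I0_def)
qed

lemma col_fin:
  assumes R: rows_on and Cl: cols_on and l: "l \<in> C" and j: "j \<in> C"
    and I: "finite I" "Cs j \<subseteq> I" "I \<subseteq> C"
  shows "(\<Sum>i\<in>I. cnj (a i l) * a i j) = (if l = j then 1 else 0)"
proof -
  have f: "finite (I \<union> Cs l)" using I Cs_fin[OF l] by auto
  have "(\<Sum>i\<in>I. cnj (a i l) * a i j) = (\<Sum>i\<in>I \<union> Cs l. cnj (a i l) * a i j)"
    using I Cs_sub f by (intro sum.mono_neutral_left) (auto simp: Cs_def)
  also have "\<dots> = (\<Sum>i\<in>Cs l. cnj (a i l) * a i j)"
    using I Cs_sub f by (intro sum.mono_neutral_right) (auto simp: Cs_def)
  finally show ?thesis using col_orth0[OF R Cl l j] by simp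
qed

lemma VU:
  assumes R: rows_on and x: "x \<in> l2 C"
  shows "Vop (Uop x) = x"
proof
  fix i
  show "Vop (Uop x) i = x i"
  proof (cases "i \<in> C")
    case False
    then show ?thesis using x by (simp add: Vop_def l2_def)
  next
    case i: True
    define G where "G = \<Union> (Cs ` Rs i)"
    have Gf: "finite G" "G \<subseteq> C" using Rs_fin[OF i] Rs_sub[OF i] Cs_fin Cs_sub unfolding G_def by blast+
    have iG: "i \<in> G"
    proof -
      obtain j where "j \<in> Rs i" using row_nonempty[OF R i] by auto
      then show ?thesis using i by (auto simp: G_def Rs_def Cs_def)
    qed
    have "Vop (Uop x) i = (\<Sum>j\<in>Rs i. (\<Sum>k\<in>Cs j. x k * a k j) * cnj (a i j))"
      using i Rs_sub[OF i] by (auto simp: Vop_def Uop_fin intro!: sum.cong)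
    also have "\<dots> = (\<Sum>j\<in>Rs i. \<Sum>k\<in>G. x k * (cnj (a i j) * a k j))"
    proof (rule sum.cong[OF refl])
      fix j assume j: "j \<in> Rs i"
      have "(\<Sum>k\<in>Cs j. x k * a k j) = (\<Sum>k\<in>G. x k * a k j)"
        using j Gf by (intro sum.mono_neutral_left) (auto simp: G_def Cs_def)
      then have "(\<Sum>k\<in>Cs j. x k * a k j) * cnj (a i j) = (\<Sum>k\<in>G. x k * a k j) * cnj (a i j)" by simp
      also have "\<dots> = (\<Sum>k\<in>G. x k * (cnj (a i j) * a k j))"
        by (subst sum_distrib_right) (simp add: mult_ac)
      finally show "(\<Sum>k\<in>Cs j. x k * a k j) * cnj (a i j) = (\<Sum>k\<in>G. x k * (cnj (a i j) * a k j))" .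
    qed
    also have "\<dots> = (\<Sum>k\<in>G. x k * (\<Sum>j\<in>Rs i. cnj (a i j) * a k j))"
      by (subst sum.swap) (simp add: sum_distrib_left)
    also have "\<dots> = (\<Sum>k\<in>G. x k * (if i = k then 1 else 0))"
      using row_fin[OF R i _ Rs_fin[OF i] _ Rs_sub[OF i]] Gf by (intro sum.cong refl) auto
    also have "\<dots> = x i" using Gf iG by (simp add: if_distrib cong: if_cong)
    finally show ?thesis .
  qed
qed

lemma UV:
  assumes R: rows_on and Cl: cols_on and y: "y \<in> l2 C"
  shows "Uop (Vop y) = y"
proof
  fix j
  show "Uop (Vop y) j = y j"
  proof (cases "j \<in> C")
    case False
    then show ?thesis using y by (simp add: Uop_def l2_def)
  next
    case j: True
    define G where "G = \<Union> (Rs ` Cs j)"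
    have Gf: "finite G" "G \<subseteq> C" using Cs_fin[OF j] Cs_sub Rs_fin Rs_sub unfolding G_def by blast+
    have jG: "j \<in> G"
    proof -
      obtain i where "i \<in> Cs j" using col_nonempty[OF Cl j] by auto
      then show ?thesis by (auto simp: G_def Rs_def Cs_def)
    qed
    have "Uop (Vop y) j = (\<Sum>i\<in>Cs j. (\<Sum>l\<in>Rs i. y l * cnj (a i l)) * a i j)"
      using j by (auto simp: Vop_def Uop_fin Cs_def intro!: sum.cong)
    also have "\<dots> = (\<Sum>i\<in>Cs j. \<Sum>l\<in>G. y l * (cnj (a i l) * a i j))"
    proof (rule sum.cong[OF refl])
      fix i assume i: "i \<in> Cs j"
      have "(\<Sum>l\<in>Rs i. y l * cnj (a i l)) = (\<Sum>l\<in>G. y l * cnj (a i l))"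
        using i Gf by (intro sum.mono_neutral_left) (auto simp: G_def Rs_def)
      then have "(\<Sum>l\<in>Rs i. y l * cnj (a i l)) * a i j = (\<Sum>l\<in>G. y l * cnj (a i l)) * a i j" by simp
      also have "\<dots> = (\<Sum>l\<in>G. y l * (cnj (a i l) * a i j))"
        by (subst sum_distrib_right) (simp add: mult_ac)
      finally show "(\<Sum>l\<in>Rs i. y l * cnj (a i l)) * a i j = (\<Sum>l\<in>G. y l * (cnj (a i l) * a i j))" .
    qed
    also have "\<dots> = (\<Sum>l\<in>G. y l * (\<Sum>i\<in>Cs j. cnj (a i l) * a i j))"
      by (subst sum.swap) (simp add: sum_distrib_left)
    also have "\<dots> = (\<Sum>l\<in>G. y l * (if l = j then 1 else 0))"
      using col_fin[OF R Cl _ j Cs_fin[OF j] _ Cs_sub] Gf by (intro sum.cong refl) auto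
    also have "\<dots> = y j" using Gf jG by (simp add: if_distrib cong: if_cong)
    finally show ?thesis .
  qed
qed

theorem unitary_iff: "unitary_on (l2 C) (ip C) Uop \<longleftrightarrow> rows_on \<and> cols_on"
proof
  assume "unitary_on (l2 C) (ip C) Uop"
  then show "rows_on \<and> cols_on" using unitary_imp by blast
next
  assume "rows_on \<and> cols_on"
  then show "unitary_on (l2 C) (ip C) Uop"
    unfolding unitary_on_def using Uop_l2 Vop_l2 adjoint VU UV by blast
qed

end

definition okw :: "'t set \<Rightarrow> 't option \<Rightarrow> 't option list \<Rightarrow> bool" where
  "okw T \<tau> \<omega> \<longleftrightarrow> length \<omega> \<le> 2 \<and> (length \<omega> = 2 \<longrightarrow> \<omega> ! 0 = \<tau>) \<and>
     (\<tau> = None \<longrightarrow> \<omega> \<in> Z0T_star T) \<and> (\<tau> \<noteq> None \<longrightarrow> \<omega> \<in> lists (Some ` T))"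

definition predp :: "'a list \<Rightarrow> nat \<Rightarrow> dir \<Rightarrow> nat" where
  "predp w p d = (case d of Stay \<Rightarrow> p | Right \<Rightarrow> (p + length w + 1) mod (length w + 2))"

lemma move_lt: "p < length w + 2 \<Longrightarrow> move w p d < length w + 2"
  by (cases d) (auto simp: move_def)

lemma predp_lt: "p < length w + 2 \<Longrightarrow> predp w p d < length w + 2"
  by (cases d) (auto simp: predp_def)

lemma move_predp: "p < length w + 2 \<Longrightarrow> move w (predp w p d) d = p"
proof (cases d)
  case Right
  assume p: "p < length w + 2"
  show ?thesis
  proof (cases "p = 0")
    case True then show ?thesis using Right by (simp add: move_def predp_def)
  next
    case False
    have e: "p + length w + 1 = (p - 1) + (length w + 2)" using False by simp
    have "(p + length w + 1) mod (length w + 2) = p - 1"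
      unfolding e mod_add_self2 using p by simp
    then show ?thesis using Right p False by (simp add: move_def predp_def)
  qed
qed (simp add: move_def predp_def)

lemma Suc_mod_inj:
  fixes m :: nat
  assumes "p1 < m" "p2 < m" "Suc p1 mod m = Suc p2 mod m"
  shows "p1 = p2"
proof (cases "Suc p1 < m")
  case True
  show ?thesis
  proof (cases "Suc p2 < m")
    case True2: True
    then show ?thesis using True assms(3) by simp
  next
    case False
    then have "Suc p2 = m" using assms(2) by simp
    then show ?thesis using True assms(3) by simp
  qed
next
  case False
  then have m1: "Suc p1 = m" using assms(1) by simp
  show ?thesis
  proof (cases "Suc p2 < m")
    case True
    then show ?thesis using m1 assms(3) by simp
  next
    case False
    then show ?thesis using m1 assms(2) by simp
  qed
qed

lemma move_inj: "p1 < length w + 2 \<Longrightarrow> p2 < length w + 2 \<Longrightarrow> move w p1 d = move w p2 d \<Longrightarrow> p1 = p2"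
  by (cases d) (auto simp: move_def intro: Suc_mod_inj)

lemma move_eq_iff: "p < length w + 2 \<Longrightarrow> p' < length w + 2 \<Longrightarrow> move w p d = p' \<longleftrightarrow> p = predp w p' d"
  using move_predp move_inj predp_lt by metis

lemma tape_mem: "w \<in> lists Sig \<Longrightarrow> p < length w + 2 \<Longrightarrow> tape w ! p \<in> gamma_set Sig"
proof -
  assume w: "w \<in> lists Sig" and p: "p < length w + 2"
  have "set (tape w) \<subseteq> gamma_set Sig" using w by (auto simp: tape_def gamma_set_def)
  moreover have "p < length (tape w)" using p by (simp add: tape_def)
  ultimately show ?thesis using nth_mem by blast
qed

lemma Z0T_last: "s \<in> Z0T_star T \<Longrightarrow> last s \<in> delta_set T"
proof -
  assume s: "s \<in> Z0T_star T"
  then have "set s \<subseteq> delta_set T" by (cases s) (auto simp: Z0T_star_def delta_set_def)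
  moreover have "s \<noteq> []" using s by (auto simp: Z0T_star_def)
  ultimately show ?thesis by auto
qed

lemma Z0T_lists: "s \<in> Z0T_star T \<Longrightarrow> s \<in> lists (delta_set T)"
  by (cases s) (auto simp: Z0T_star_def delta_set_def)

lemma finite_delta: "finite T \<Longrightarrow> finite (delta_set T)" by (simp add: delta_set_def)

locale qctx =
  fixes Q :: "'q set" and Sig :: "'a set" and T :: "'t set" and q0 :: 'q and Qa Qr :: "'q set"
    and \<delta> :: "('q, 'a, 't) trans" and D :: "'q \<Rightarrow> dir"
  assumes struct: "qpa_structure Q Sig T q0 Qa Qr \<delta>"
    and simpl: "qpa_simplified Q Sig T \<delta> D"
begin

definition "ph = reduced_trans \<delta> D"
definition "LL = {\<omega> \<in> lists (delta_set T). length \<omega> \<le> 2}"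
definition "KS = Q \<times> LL"
definition "img c k = (case c of (w,p,q1,s) \<Rightarrow> case k of (q,\<omega>) \<Rightarrow> (w, move w p (D q), q, butlast s @ \<omega>))"
definition "coef c k = (case c of (w,p,q1,s) \<Rightarrow> case k of (q,\<omega>) \<Rightarrow> ph q1 (tape w ! p) (last s) q \<omega>)"

lemma img_simp[simp]: "img (w,p,q1,s) (q,\<omega>) = (w, move w p (D q), q, butlast s @ \<omega>)"
  by (simp add: img_def)
lemma coef_simp[simp]: "coef (w,p,q1,s) (q,\<omega>) = ph q1 (tape w ! p) (last s) q \<omega>"
  by (simp add: coef_def)

lemma finQ: "finite Q" using struct by (simp add: qpa_structure_def)
lemma finT: "finite T" using struct by (simp add: qpa_structure_def)
lemma finD: "finite (delta_set T)" using finT by (simp add: delta_set_def)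
lemma finLL: "finite LL"
proof -
  have "LL \<subseteq> {xs. set xs \<subseteq> delta_set T \<and> length xs \<le> 2}" by (auto simp: LL_def)
  then show ?thesis using finite_lists_length_le[OF finD, of 2] finite_subset by blast
qed
lemma finKS: "finite KS" using finQ finLL by (simp add: KS_def)

lemma struct_at:
  assumes "q \<in> Q" "\<alpha> \<in> gamma_set Sig" "\<beta> \<in> delta_set T" "q' \<in> Q" "\<omega> \<in> lists (delta_set T)"
  shows "cmod (\<delta> q \<alpha> \<beta> q' d \<omega>) \<le> 1"
    "\<delta> q \<alpha> \<beta> q' d \<omega> \<noteq> 0 \<Longrightarrow> okw T \<beta> \<omega>"
  using struct assms unfolding qpa_structure_def okw_def by blast+

lemma simpl_at:
  assumes "q1 \<in> Q" "\<sigma> \<in> gamma_set Sig" "\<tau> \<in> delta_set T" "q \<in> Q" "\<omega> \<in> lists (delta_set T)" "D q \<noteq> d"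
  shows "\<delta> q1 \<sigma> \<tau> q d \<omega> = 0"
  using simpl assms unfolding qpa_simplified_def by blast

lemma ph_ok:
  assumes "q1 \<in> Q" "\<sigma> \<in> gamma_set Sig" "\<tau> \<in> delta_set T" "q \<in> Q" "\<omega> \<in> lists (delta_set T)"
    "ph q1 \<sigma> \<tau> q \<omega> \<noteq> 0"
  shows "okw T \<tau> \<omega>"
  using struct_at(2)[OF assms(1-5)] assms(6) by (simp add: ph_def reduced_trans_def)

lemma ph_zero:
  assumes "q1 \<in> Q" "\<sigma> \<in> gamma_set Sig" "\<tau> \<in> delta_set T" "q \<in> Q" "\<omega> \<in> lists (delta_set T)"
    "\<not> okw T \<tau> \<omega>"
  shows "ph q1 \<sigma> \<tau> q \<omega> = 0"
  using ph_ok assms by blast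

lemma ph_bnd:
  assumes "q1 \<in> Q" "\<sigma> \<in> gamma_set Sig" "\<tau> \<in> delta_set T" "q \<in> Q" "\<omega> \<in> lists (delta_set T)"
  shows "cmod (ph q1 \<sigma> \<tau> q \<omega>) \<le> 1"
  using struct_at(1)[OF assms] by (simp add: ph_def reduced_trans_def)

lemma ph_LL:
  assumes "q1 \<in> Q" "\<sigma> \<in> gamma_set Sig" "\<tau> \<in> delta_set T" "q \<in> Q" "\<omega> \<in> lists (delta_set T)"
    "\<omega> \<notin> LL"
  shows "ph q1 \<sigma> \<tau> q \<omega> = 0"
  using ph_ok[OF assms(1-5)] assms(5,6) by (auto simp: okw_def LL_def)

lemma conf_props:
  assumes "(w,p,q1,s) \<in> configs Q Sig T"
  shows "w \<in> lists Sig" "p < length w + 2" "q1 \<in> Q" "s \<in> Z0T_star T"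
    "tape w ! p \<in> gamma_set Sig" "last s \<in> delta_set T" "s \<noteq> []"
proof -
  have *: "w \<in> lists Sig" "p < length w + 2" "q1 \<in> Q" "s \<in> Z0T_star T"
    using assms by (auto simp: configs_def)
  then show "w \<in> lists Sig" "p < length w + 2" "q1 \<in> Q" "s \<in> Z0T_star T"
    "tape w ! p \<in> gamma_set Sig" "last s \<in> delta_set T" "s \<noteq> []"
    using tape_mem[OF *(1,2)] Z0T_last[OF *(4)] by (auto simp: Z0T_star_def)
qed

lemma amp_formula:
  assumes c: "c \<in> configs Q Sig T"
  shows "evol_amp Q T \<delta> c c' = (\<Sum>k\<in>KS. if c' = img c k then coef c k else 0)"
proof -
  obtain w p q1 s where cc: "c = (w,p,q1,s)" by (cases c) auto
  note cp = conf_props[OF c[unfolded cc]]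
  define h where "h = (\<lambda>(q::'q,\<omega>::'t option list). (q, D q, \<omega>))"
  define F where "F = (\<lambda>(q, d, \<omega>). if c' = (w, move w p d, q, butlast s @ \<omega>)
                          then \<delta> q1 (tape w ! p) (last s) q d \<omega> else 0)"
  have inj: "inj_on h KS" by (auto simp: h_def inj_on_def)
  have "evol_amp Q T \<delta> c c' = infsum F (Q \<times> UNIV \<times> lists (delta_set T))"
    by (simp add: evol_amp_def cc F_def)
  also have "\<dots> = sum F (h ` KS)"
  proof (rule infsum_fin_supp)
    show "finite (h ` KS)" using finKS by simp
    show "h ` KS \<subseteq> Q \<times> UNIV \<times> lists (delta_set T)" by (auto simp: h_def KS_def LL_def)
    fix x assume x: "x \<in> Q \<times> UNIV \<times> lists (delta_set T)" "x \<notin> h ` KS"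
    then obtain q d \<omega> where xx: "x = (q,d,\<omega>)" "q \<in> Q" "\<omega> \<in> lists (delta_set T)" by auto
    show "F x = 0"
    proof (cases "d = D q")
      case True
      then have "\<omega> \<notin> LL" using x xx by (auto simp: h_def KS_def image_iff)
      then have "ph q1 (tape w ! p) (last s) q \<omega> = 0" using ph_LL cp xx by blast
      then show ?thesis using True by (simp add: F_def xx ph_def reduced_trans_def)
    next
      case False
      then show ?thesis using simpl_at[of q1 "tape w ! p" "last s" q \<omega> d] cp xx by (simp add: F_def)
    qed
  qed
  also have "\<dots> = sum (F \<circ> h) KS" using inj by (rule sum.reindex)
  also have "\<dots> = (\<Sum>k\<in>KS. if c' = img c k then coef c k else 0)"
    by (intro sum.cong refl) (auto simp: F_def h_def cc ph_def reduced_trans_def)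
  finally show ?thesis .
qed

end

lemma Z0T_last_None:
  assumes s: "s \<in> Z0T_star T" and l: "last s = None" shows "s = [None]"
proof (cases s)
  case Nil then show ?thesis using s by (simp add: Z0T_star_def)
next
  case (Cons x xs)
  have x: "x = None" "xs \<in> lists (Some ` T)" using s Cons by (auto simp: Z0T_star_def)
  show ?thesis
  proof (cases "xs = []")
    case True then show ?thesis using x Cons by simp
  next
    case False
    then have "last xs \<in> set xs" by simp
    then have "last xs \<in> Some ` T" using x by auto
    then show ?thesis using l Cons False by auto
  qed
qed

context qctx begin

lemma img_inj: "img c k1 = img c k2 \<Longrightarrow> k1 = k2"
  by (cases c, cases k1, cases k2) auto

lemma amp_img:
  assumes c: "c \<in> configs Q Sig T" and k: "k \<in> KS"
  shows "evol_amp Q T \<delta> c (img c k) = coef c k"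
proof -
  have "evol_amp Q T \<delta> c (img c k) = (\<Sum>k'\<in>KS. if k' = k then coef c k' else 0)"
    unfolding amp_formula[OF c] by (intro sum.cong refl) (auto dest: img_inj)
  also have "\<dots> = coef c k" using k finKS by simp
  finally show ?thesis .
qed

lemma amp_notimg:
  assumes c: "c \<in> configs Q Sig T" and n: "\<And>k. k \<in> KS \<Longrightarrow> c' \<noteq> img c k"
  shows "evol_amp Q T \<delta> c c' = 0"
  unfolding amp_formula[OF c] using n by simp

lemma amp_cases:
  assumes c: "c \<in> configs Q Sig T" and nz: "evol_amp Q T \<delta> c c' \<noteq> 0"
  obtains k where "k \<in> KS" "c' = img c k" "evol_amp Q T \<delta> c c' = coef c k"
  using amp_img amp_notimg c nz by metis

lemma coef_C:
  assumes c: "c \<in> configs Q Sig T" and k: "k \<in> KS" and nz: "coef c k \<noteq> 0"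
  shows "img c k \<in> configs Q Sig T"
proof -
  obtain w p q1 s where cc: "c = (w,p,q1,s)" by (cases c) auto
  obtain q \<omega> where kk: "k = (q,\<omega>)" by (cases k) auto
  note cp = conf_props[OF c[unfolded cc]]
  have q: "q \<in> Q" "\<omega> \<in> lists (delta_set T)" using k by (auto simp: kk KS_def LL_def)
  have ok: "okw T (last s) \<omega>"
    using ph_ok[OF cp(3) cp(5) cp(6) q] nz by (simp add: cc kk)
  have "butlast s @ \<omega> \<in> Z0T_star T"
  proof (cases "last s = None")
    case True
    then have "s = [None]" using Z0T_last_None[OF cp(4)] by simp
    then show ?thesis using ok True by (simp add: okw_def)
  next
    case False
    have s: "s = None # tl s" "tl s \<noteq> []" "tl s \<in> lists (Some ` T)"
      using cp(4) cp(7) False by (cases s; auto simp: Z0T_star_def)+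
    have "\<omega> \<in> lists (Some ` T)" using ok False by (simp add: okw_def)
    moreover have "butlast s = None # butlast (tl s)" using s by (metis butlast.simps(2))
    moreover have "butlast (tl s) \<in> lists (Some ` T)" using s(3) by (auto dest: in_set_butlastD)
    ultimately show ?thesis by (auto simp: Z0T_star_def)
  qed
  moreover have "move w p (D q) < length w + 2" using move_lt[OF cp(2)] .
  ultimately show ?thesis using cp q by (simp add: cc kk configs_def)
qed

definition "Kb = card KS + card (Q \<times> {..2::nat} \<times> delta_set T)"

definition "PreS c' = (case c' of (w,p',q',s') \<Rightarrow>
   (\<lambda>(q1,m,\<tau>). (w, predp w p' (D q'), q1, take (length s' - m) s' @ [\<tau>])) ` (Q \<times> {..2::nat} \<times> delta_set T))"

lemma pre_sub:
  assumes c: "c \<in> configs Q Sig T" and nz: "evol_amp Q T \<delta> c c' \<noteq> 0"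
  shows "c \<in> PreS c'"
proof -
  obtain k where k: "k \<in> KS" "c' = img c k" using amp_cases[OF c nz] by blast
  obtain w p q1 s where cc: "c = (w,p,q1,s)" by (cases c) auto
  obtain q \<omega> where kk: "k = (q,\<omega>)" by (cases k) auto
  note cp = conf_props[OF c[unfolded cc]]
  have l: "length \<omega> \<le> 2" using k by (auto simp: kk KS_def LL_def)
  have p: "p = predp w (move w p (D q)) (D q)"
    using move_eq_iff[of p w "move w p (D q)" "D q"] cp(2) move_lt[OF cp(2), of "D q"] by simp
  have s: "s = butlast s @ [last s]" using cp(7) by simp
  have e: "(w,p,q1,s) = (\<lambda>(q1,m,\<tau>). (w, predp w (move w p (D q)) (D q), q1,
       take (length (butlast s @ \<omega>) - m) (butlast s @ \<omega>) @ [\<tau>])) (q1, length \<omega>, last s)"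
    using p s by simp
  have m: "(q1, length \<omega>, last s) \<in> Q \<times> {..2::nat} \<times> delta_set T" using cp(3) cp(6) l by auto
  show ?thesis unfolding PreS_def k(2) cc kk img_simp prod.case
    by (rule rev_image_eqI[where x="(q1, length \<omega>, last s)", OF m]) (use e in simp)
qed

lemma fmat_inst: "fmat (configs Q Sig T) (evol_amp Q T \<delta>) Kb"
proof
  fix c c' assume c: "c \<in> configs Q Sig T"
  {
    assume nz: "evol_amp Q T \<delta> c c' \<noteq> 0"
    obtain k where k: "k \<in> KS" "c' = img c k" "evol_amp Q T \<delta> c c' = coef c k"
      using amp_cases[OF c nz] by blast
    show "c' \<in> configs Q Sig T" using coef_C[OF c k(1)] k nz by simp
  }
  have sub: "{c'. evol_amp Q T \<delta> c c' \<noteq> 0} \<subseteq> img c ` KS"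
    using amp_cases[OF c] by blast
  then show "finite {c'. evol_amp Q T \<delta> c c' \<noteq> 0}" using finKS finite_subset by blast
  have "card {c'. evol_amp Q T \<delta> c c' \<noteq> 0} \<le> card (img c ` KS)"
    using sub finKS by (intro card_mono) auto
  also have "\<dots> \<le> card KS" using card_image_le finKS by blast
  finally show "card {c'. evol_amp Q T \<delta> c c' \<noteq> 0} \<le> Kb" by (simp add: Kb_def)
  show "cmod (evol_amp Q T \<delta> c c') \<le> 1"
  proof (cases "evol_amp Q T \<delta> c c' = 0")
    case False
    obtain k where k: "k \<in> KS" "c' = img c k" "evol_amp Q T \<delta> c c' = coef c k"
      using amp_cases[OF c False] by blast
    obtain w p q1 s where cc: "c = (w,p,q1,s)" by (cases c) auto
    obtain q \<omega> where kk: "k = (q,\<omega>)" by (cases k) auto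
    note cp = conf_props[OF c[unfolded cc]]
    have q: "q \<in> Q" "\<omega> \<in> lists (delta_set T)" using k by (auto simp: kk KS_def LL_def)
    show ?thesis using k(3) ph_bnd[OF cp(3) cp(5) cp(6) q] by (simp add: cc kk)
  qed simp
next
  fix c' assume c': "c' \<in> configs Q Sig T"
  have fin: "finite (Q \<times> {..2::nat} \<times> delta_set T)" using finQ finD by simp
  have sub: "{c \<in> configs Q Sig T. evol_amp Q T \<delta> c c' \<noteq> 0} \<subseteq> PreS c'"
    using pre_sub by blast
  have fP: "finite (PreS c')" using fin by (auto simp: PreS_def split: prod.splits)
  then show "finite {c \<in> configs Q Sig T. evol_amp Q T \<delta> c c' \<noteq> 0}" using sub finite_subset by blast
  have "card {c \<in> configs Q Sig T. evol_amp Q T \<delta> c c' \<noteq> 0} \<le> card (PreS c')"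
    using sub fP by (intro card_mono) auto
  also have "\<dots> \<le> card (Q \<times> {..2::nat} \<times> delta_set T)"
    using fin by (auto simp: PreS_def split: prod.splits intro: card_image_le)
  finally show "card {c \<in> configs Q Sig T. evol_amp Q T \<delta> c c' \<noteq> 0} \<le> Kb" by (simp add: Kb_def)
qed

end

sublocale qctx \<subseteq> fm: fmat "configs Q Sig T" "evol_amp Q T \<delta>" Kb
  by (rule fmat_inst)

context qctx begin

lemma evol_op_eq: "evol_op Q Sig T \<delta> = fm.Uop"
  by (intro ext) (simp add: evol_op_def fm.Uop_def)

end

lemma sum_prod_split: "(\<Sum>k\<in>A \<times> B. h k) = (\<Sum>x\<in>A. \<Sum>y\<in>B. h (x,y))"
  by (simp add: sum.cartesian_product)

context qctx begin

abbreviation "amp \<equiv> evol_amp Q T \<delta>"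
abbreviation "CC \<equiv> configs Q Sig T"

definition "GG c1 c2 = infsum (\<lambda>c'. cnj (amp c1 c') * amp c2 c') CC"

lemma GG_sym: "GG c1 c2 = cnj (GG c2 c1)"
  unfolding GG_def infsum_cnj[symmetric] by (simp add: mult.commute)

lemma row_formula:
  assumes c1: "c1 \<in> CC" and c2: "c2 \<in> CC"
  shows "GG c1 c2 = (\<Sum>k1\<in>KS. \<Sum>k2\<in>KS. if img c1 k1 = img c2 k2 then cnj (coef c1 k1) * coef c2 k2 else 0)"
proof -
  have fin: "finite (img c1 ` KS)" using finKS by simp
  have "GG c1 c2 = (\<Sum>c'\<in>img c1 ` KS \<inter> CC. cnj (amp c1 c') * amp c2 c')"
    unfolding GG_def
  proof (rule infsum_fin_supp)
    fix x assume x: "x \<in> CC" "x \<notin> img c1 ` KS \<inter> CC"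
    have "amp c1 x = 0" by (rule amp_notimg[OF c1]) (use x in auto)
    then show "cnj (amp c1 x) * amp c2 x = 0" by simp
  qed (use fin in auto)
  also have "\<dots> = (\<Sum>c'\<in>img c1 ` KS. cnj (amp c1 c') * amp c2 c')"
    by (rule sum.mono_neutral_left) (use fin fm.rowC[OF c1] in auto)
  also have "\<dots> = (\<Sum>k1\<in>KS. cnj (amp c1 (img c1 k1)) * amp c2 (img c1 k1))"
    by (subst sum.reindex) (auto simp: inj_on_def dest: img_inj)
  also have "\<dots> = (\<Sum>k1\<in>KS. \<Sum>k2\<in>KS. if img c1 k1 = img c2 k2 then cnj (coef c1 k1) * coef c2 k2 else 0)"
    by (intro sum.cong refl) (simp add: amp_img[OF c1] amp_formula[OF c2] sum_distrib_left if_distrib eq_commute cong: if_cong)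
  finally show ?thesis .
qed

lemma row_diff:
  assumes c1: "(w1,p1,q1,s1) \<in> CC" and c2: "(w2,p2,q2,s2) \<in> CC" and d: "(w1,p1) \<noteq> (w2,p2)"
  shows "GG (w1,p1,q1,s1) (w2,p2,q2,s2) = 0"
proof -
  have "img (w1,p1,q1,s1) k1 \<noteq> img (w2,p2,q2,s2) k2" for k1 k2
  proof
    assume e: "img (w1,p1,q1,s1) k1 = img (w2,p2,q2,s2) k2"
    obtain qa o1 qb o2 where k: "k1 = (qa,o1)" "k2 = (qb,o2)" by (cases k1, cases k2) auto
    have "w1 = w2" "qa = qb" "move w1 p1 (D qa) = move w1 p2 (D qa)" using e k by auto
    then have "p1 = p2" using move_inj conf_props(2)[OF c1] conf_props(2)[OF c2] by metis
    then show False using d \<open>w1 = w2\<close> by simp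
  qed
  then show ?thesis using row_formula[OF c1 c2] by simp
qed

definition "HH b1 b2 f g = (\<Sum>o1\<in>LL. \<Sum>o2\<in>LL. if b1 @ o1 = b2 @ o2 then cnj (f o1) * g o2 else 0)"

lemma row_same:
  assumes c1: "(w,p,q1,s1) \<in> CC" and c2: "(w,p,q2,s2) \<in> CC"
  shows "GG (w,p,q1,s1) (w,p,q2,s2) =
     (\<Sum>q\<in>Q. HH (butlast s1) (butlast s2) (ph q1 (tape w ! p) (last s1) q) (ph q2 (tape w ! p) (last s2) q))"
proof -
  let ?F = "\<lambda>qa o1 qb o2. if qa = qb \<and> butlast s1 @ o1 = butlast s2 @ o2
     then cnj (ph q1 (tape w ! p) (last s1) qa o1) * ph q2 (tape w ! p) (last s2) qb o2 else 0"
  have "GG (w,p,q1,s1) (w,p,q2,s2) = (\<Sum>k1\<in>Q \<times> LL. \<Sum>k2\<in>Q \<times> LL. ?F (fst k1) (snd k1) (fst k2) (snd k2))"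
    unfolding row_formula[OF c1 c2] KS_def
    by (intro sum.cong refl) (auto simp: case_prod_beta)
  also have "\<dots> = (\<Sum>qa\<in>Q. \<Sum>o1\<in>LL. \<Sum>qb\<in>Q. \<Sum>o2\<in>LL. ?F qa o1 qb o2)"
    by (simp only: sum_prod_split fst_conv snd_conv)
  also have "\<dots> = (\<Sum>qa\<in>Q. \<Sum>o1\<in>LL. \<Sum>o2\<in>LL. \<Sum>qb\<in>Q. ?F qa o1 qb o2)"
    by (intro sum.cong refl sum.swap)
  also have "\<dots> = (\<Sum>qa\<in>Q. \<Sum>o1\<in>LL. \<Sum>o2\<in>LL. if butlast s1 @ o1 = butlast s2 @ o2
     then cnj (ph q1 (tape w ! p) (last s1) qa o1) * ph q2 (tape w ! p) (last s2) qa o2 else 0)"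
  proof (intro sum.cong refl)
    fix qa o1 o2 assume qa: "qa \<in> Q"
    show "(\<Sum>qb\<in>Q. ?F qa o1 qb o2) = (if butlast s1 @ o1 = butlast s2 @ o2
     then cnj (ph q1 (tape w ! p) (last s1) qa o1) * ph q2 (tape w ! p) (last s2) qa o2 else 0)"
      using qa finQ by (simp add: if_distrib[symmetric] sum.delta cong: if_cong) 
  qed
  also have "\<dots> = (\<Sum>q\<in>Q. HH (butlast s1) (butlast s2) (ph q1 (tape w ! p) (last s1) q) (ph q2 (tape w ! p) (last s2) q))"
    by (simp add: HH_def)
  finally show ?thesis .
qed

end

lemma match_cases:
  assumes e: "b1 @ o1 = b2 @ o2" and l: "length o1 \<le> 2" "length o2 \<le> 2"
  shows "b1 = b2 \<or> (\<exists>t. b1 = b2 @ [t]) \<or> (\<exists>t u. b1 = b2 @ [t,u]) \<or> (\<exists>t. b2 = b1 @ [t]) \<or> (\<exists>t u. b2 = b1 @ [t,u])"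
proof -
  obtain us where us: "(b1 = b2 @ us \<and> us @ o1 = o2) \<or> (b1 @ us = b2 \<and> o1 = us @ o2)"
    using e by (auto simp: append_eq_append_conv2)
  then have lu: "length us \<le> 2" using l by auto
  have "us = [] \<or> (\<exists>t. us = [t]) \<or> (\<exists>t u. us = [t,u])"
  proof (cases us)
    case (Cons x xs) then show ?thesis using lu by (cases xs) (auto simp: length_Suc_conv)
  qed simp
  then show ?thesis using us by auto
qed

context qctx begin

lemma LL_1: "t \<in> delta_set T \<Longrightarrow> {o1 \<in> LL. t # o1 \<in> LL} = insert [] ((\<lambda>x. [x]) ` delta_set T)"
  by (auto simp: LL_def length_Suc_conv image_iff le_Suc_eq numeral_2_eq_2)

lemma LL_2: "t \<in> delta_set T \<Longrightarrow> u \<in> delta_set T \<Longrightarrow> {o1 \<in> LL. t # u # o1 \<in> LL} = {[]}"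
  by (auto simp: LL_def)

lemma HH_eq: "HH b b f g = (\<Sum>\<omega>\<in>LL. cnj (f \<omega>) * g \<omega>)"
  unfolding HH_def using finLL by (simp add: sum.delta cong: if_cong)

lemma HH_1:
  assumes t: "t \<in> delta_set T"
  shows "HH (b @ [t]) b f g = cnj (f []) * g [t] + (\<Sum>\<tau>\<in>delta_set T. cnj (f [\<tau>]) * g [t, \<tau>])"
proof -
  have "HH (b @ [t]) b f g = (\<Sum>o1\<in>LL. \<Sum>o2\<in>LL. if o2 = t # o1 then cnj (f o1) * g o2 else 0)"
    unfolding HH_def by (intro sum.cong refl) auto
  also have "\<dots> = (\<Sum>o1\<in>LL. if t # o1 \<in> LL then cnj (f o1) * g (t # o1) else 0)"
    using finLL by (simp add: sum.delta' cong: if_cong)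
  also have "\<dots> = (\<Sum>o1\<in>{o1 \<in> LL. t # o1 \<in> LL}. cnj (f o1) * g (t # o1))"
    using finLL by (simp add: sum.inter_filter)
  also have "\<dots> = (\<Sum>o1\<in>insert [] ((\<lambda>x. [x]) ` delta_set T). cnj (f o1) * g (t # o1))"
    using LL_1[OF t] by simp
  also have "\<dots> = cnj (f []) * g [t] + (\<Sum>o1\<in>(\<lambda>x. [x]) ` delta_set T. cnj (f o1) * g (t # o1))"
    using finD by (subst sum.insert) auto
  also have "(\<Sum>o1\<in>(\<lambda>x. [x]) ` delta_set T. cnj (f o1) * g (t # o1)) = (\<Sum>\<tau>\<in>delta_set T. cnj (f [\<tau>]) * g [t, \<tau>])"
    by (subst sum.reindex) (auto simp: inj_on_def)
  finally show ?thesis .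
qed

lemma HH_2:
  assumes t: "t \<in> delta_set T" "u \<in> delta_set T"
  shows "HH (b @ [t,u]) b f g = cnj (f []) * g [t,u]"
proof -
  have "HH (b @ [t,u]) b f g = (\<Sum>o1\<in>LL. \<Sum>o2\<in>LL. if o2 = t # u # o1 then cnj (f o1) * g o2 else 0)"
    unfolding HH_def by (intro sum.cong refl) auto
  also have "\<dots> = (\<Sum>o1\<in>LL. if t # u # o1 \<in> LL then cnj (f o1) * g (t # u # o1) else 0)"
    using finLL by (simp add: sum.delta' cong: if_cong)
  also have "\<dots> = (\<Sum>o1\<in>{o1 \<in> LL. t # u # o1 \<in> LL}. cnj (f o1) * g (t # u # o1))"
    using finLL by (simp add: sum.inter_filter)
  also have "\<dots> = cnj (f []) * g [t,u]" using LL_2[OF t] by simp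
  finally show ?thesis .
qed

lemma HH_none:
  assumes "\<And>o1 o2. o1 \<in> LL \<Longrightarrow> o2 \<in> LL \<Longrightarrow> b1 @ o1 \<noteq> b2 @ o2"
  shows "HH b1 b2 f g = 0"
  unfolding HH_def using assms by (simp add: sum.neutral)

end

context qctx begin

definition "R1 \<longleftrightarrow> (\<forall>q1\<in>Q. \<forall>\<sigma>1\<in>gamma_set Sig. \<forall>\<tau>1\<in>delta_set T.
        infsum (\<lambda>(q, \<omega>). (cmod (ph q1 \<sigma>1 \<tau>1 q \<omega>))\<^sup>2) (Q \<times> lists (delta_set T)) = 1)"
definition "R2 \<longleftrightarrow> (\<forall>q1\<in>Q. \<forall>q2\<in>Q. \<forall>\<sigma>1\<in>gamma_set Sig. \<forall>\<tau>1\<in>delta_set T. \<forall>\<tau>2\<in>delta_set T.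
        (q1, \<tau>1) \<noteq> (q2, \<tau>2) \<longrightarrow>
        infsum (\<lambda>(q, \<omega>). cnj (ph q1 \<sigma>1 \<tau>1 q \<omega>) * ph q2 \<sigma>1 \<tau>2 q \<omega>) (Q \<times> lists (delta_set T)) = 0)"
definition "E4a q1 q2 \<sigma>1 \<tau>1 \<tau>2 \<tau>3 =
   infsum (\<lambda>(q, \<tau>). cnj (ph q1 \<sigma>1 \<tau>1 q [\<tau>]) * ph q2 \<sigma>1 \<tau>2 q [\<tau>3, \<tau>]) (Q \<times> delta_set T)
          + (\<Sum>q\<in>Q. cnj (ph q1 \<sigma>1 \<tau>1 q []) * ph q2 \<sigma>1 \<tau>2 q [\<tau>3])"
definition "E4b q1 q2 \<sigma>1 \<tau>1 \<tau>2 \<tau>3 = (\<Sum>q\<in>Q. cnj (ph q1 \<sigma>1 \<tau>1 q []) * ph q2 \<sigma>1 \<tau>2 q [\<tau>2, \<tau>3])"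
definition "R4 \<longleftrightarrow> (\<forall>q1\<in>Q. \<forall>q2\<in>Q. \<forall>\<sigma>1\<in>gamma_set Sig. \<forall>\<tau>1\<in>delta_set T. \<forall>\<tau>2\<in>delta_set T. \<forall>\<tau>3\<in>delta_set T.
        E4a q1 q2 \<sigma>1 \<tau>1 \<tau>2 \<tau>3 = 0 \<and> E4b q1 q2 \<sigma>1 \<tau>1 \<tau>2 \<tau>3 = 0)"

definition "P0 q1 q2 \<sigma> \<tau>1 \<tau>2 = (\<Sum>q\<in>Q. \<Sum>\<omega>\<in>LL. cnj (ph q1 \<sigma> \<tau>1 q \<omega>) * ph q2 \<sigma> \<tau>2 q \<omega>)"

lemma P0_formal:
  assumes "q1 \<in> Q" "\<sigma> \<in> gamma_set Sig" "\<tau>1 \<in> delta_set T"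
  shows "infsum (\<lambda>(q, \<omega>). cnj (ph q1 \<sigma> \<tau>1 q \<omega>) * ph q2 \<sigma> \<tau>2 q \<omega>) (Q \<times> lists (delta_set T)) = P0 q1 q2 \<sigma> \<tau>1 \<tau>2"
proof -
  have "infsum (\<lambda>(q, \<omega>). cnj (ph q1 \<sigma> \<tau>1 q \<omega>) * ph q2 \<sigma> \<tau>2 q \<omega>) (Q \<times> lists (delta_set T))
      = (\<Sum>k\<in>Q \<times> LL. (\<lambda>(q, \<omega>). cnj (ph q1 \<sigma> \<tau>1 q \<omega>) * ph q2 \<sigma> \<tau>2 q \<omega>) k)"
  proof (rule infsum_fin_supp)
    fix x assume x: "x \<in> Q \<times> lists (delta_set T)" "x \<notin> Q \<times> LL"
    then obtain q \<omega> where xx: "x = (q,\<omega>)" "q \<in> Q" "\<omega> \<in> lists (delta_set T)" "\<omega> \<notin> LL" by auto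
    then have "ph q1 \<sigma> \<tau>1 q \<omega> = 0" by (intro ph_LL) (use assms in auto)
    then show "(\<lambda>(q, \<omega>). cnj (ph q1 \<sigma> \<tau>1 q \<omega>) * ph q2 \<sigma> \<tau>2 q \<omega>) x = 0" by (simp add: xx)
  qed (use finQ finLL in \<open>auto simp: LL_def\<close>)
  then show ?thesis by (simp add: sum_prod_split P0_def)
qed

lemma P0_norm:
  assumes "q1 \<in> Q" "\<sigma> \<in> gamma_set Sig" "\<tau>1 \<in> delta_set T"
  shows "of_real (infsum (\<lambda>(q, \<omega>). (cmod (ph q1 \<sigma> \<tau>1 q \<omega>))\<^sup>2) (Q \<times> lists (delta_set T))) = P0 q1 q1 \<sigma> \<tau>1 \<tau>1"
proof -
  have "infsum (\<lambda>(q, \<omega>). (cmod (ph q1 \<sigma> \<tau>1 q \<omega>))\<^sup>2) (Q \<times> lists (delta_set T))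
      = (\<Sum>k\<in>Q \<times> LL. (\<lambda>(q, \<omega>). (cmod (ph q1 \<sigma> \<tau>1 q \<omega>))\<^sup>2) k)"
  proof (rule infsum_fin_supp)
    fix x assume x: "x \<in> Q \<times> lists (delta_set T)" "x \<notin> Q \<times> LL"
    then obtain q \<omega> where xx: "x = (q,\<omega>)" "q \<in> Q" "\<omega> \<in> lists (delta_set T)" "\<omega> \<notin> LL" by auto
    then have "ph q1 \<sigma> \<tau>1 q \<omega> = 0" by (intro ph_LL) (use assms in auto)
    then show "(\<lambda>(q, \<omega>). (cmod (ph q1 \<sigma> \<tau>1 q \<omega>))\<^sup>2) x = 0" by (simp add: xx)
  qed (use finQ finLL in \<open>auto simp: LL_def\<close>)
  also have "\<dots> = (\<Sum>q\<in>Q. \<Sum>\<omega>\<in>LL. (cmod (ph q1 \<sigma> \<tau>1 q \<omega>))\<^sup>2)" by (simp add: sum_prod_split)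
  finally have e: "infsum (\<lambda>(q, \<omega>). (cmod (ph q1 \<sigma> \<tau>1 q \<omega>))\<^sup>2) (Q \<times> lists (delta_set T)) = \<dots>" .
  have sq: "cnj z * z = of_real ((cmod z)\<^sup>2)" for z
    by (subst mult.commute) (rule complex_norm_square[symmetric])
  show ?thesis unfolding e P0_def sq by simp
qed

lemma E4a_HH:
  assumes t: "\<tau>3 \<in> delta_set T"
  shows "(\<Sum>q\<in>Q. HH (b @ [\<tau>3]) b (ph q1 \<sigma> \<tau>1 q) (ph q2 \<sigma> \<tau>2 q)) = E4a q1 q2 \<sigma> \<tau>1 \<tau>2 \<tau>3"
proof -
  have "infsum (\<lambda>(q, \<tau>). cnj (ph q1 \<sigma> \<tau>1 q [\<tau>]) * ph q2 \<sigma> \<tau>2 q [\<tau>3, \<tau>]) (Q \<times> delta_set T)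
     = (\<Sum>q\<in>Q. \<Sum>\<tau>\<in>delta_set T. cnj (ph q1 \<sigma> \<tau>1 q [\<tau>]) * ph q2 \<sigma> \<tau>2 q [\<tau>3, \<tau>])"
    using finQ finD by (simp add: sum_prod_split)
  then show ?thesis unfolding E4a_def HH_1[OF t] by (simp add: sum.distrib)
qed

lemma E4b_HH:
  assumes t: "t \<in> delta_set T" "u \<in> delta_set T"
  shows "(\<Sum>q\<in>Q. HH (b @ [t,u]) b (ph q1 \<sigma> \<tau>1 q) (ph q2 \<sigma> \<tau>2 q)) = (\<Sum>q\<in>Q. cnj (ph q1 \<sigma> \<tau>1 q []) * ph q2 \<sigma> \<tau>2 q [t,u])"
  unfolding HH_2[OF t] ..

lemma HH_P0: "(\<Sum>q\<in>Q. HH b b (ph q1 \<sigma> \<tau>1 q) (ph q2 \<sigma> \<tau>2 q)) = P0 q1 q2 \<sigma> \<tau>1 \<tau>2"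
  unfolding HH_eq P0_def ..

lemma stack_elems: "s \<in> Z0T_star T \<Longrightarrow> x \<in> set s \<Longrightarrow> x \<in> delta_set T"
  using Z0T_lists by (auto simp: Z0T_star_def)

lemma okw_Nil: "okw T \<tau> [] \<longleftrightarrow> \<tau> \<noteq> None"
  by (simp add: okw_def Z0T_star_def)
lemma okw_single: "okw T \<tau> [x] \<longleftrightarrow> (\<tau> = None \<longrightarrow> x = None) \<and> (\<tau> \<noteq> None \<longrightarrow> x \<in> Some ` T)"
  by (simp add: okw_def Z0T_star_def)
lemma okw_pair: "okw T \<tau> [x,y] \<longleftrightarrow> x = \<tau> \<and> y \<in> Some ` T \<and> (\<tau> \<noteq> None \<longrightarrow> x \<in> Some ` T)"
  by (auto simp: okw_def Z0T_star_def)
lemma None_notin_Some: "None \<notin> Some ` T" by auto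

lemma R2_zero:
  assumes "q1 \<in> Q" "q2 \<in> Q" "\<sigma> \<in> gamma_set Sig" "\<tau>1 \<in> delta_set T" "\<tau>2 \<in> delta_set T"
    and inv: "(\<tau>1 = None) \<noteq> (\<tau>2 = None)"
  shows "P0 q1 q2 \<sigma> \<tau>1 \<tau>2 = 0"
  unfolding P0_def
proof (intro sum.neutral ballI)
  fix q \<omega> assume q: "q \<in> Q" and o: "\<omega> \<in> LL"
  have ol: "\<omega> \<in> lists (delta_set T)" using o by (simp add: LL_def)
  show "cnj (ph q1 \<sigma> \<tau>1 q \<omega>) * ph q2 \<sigma> \<tau>2 q \<omega> = 0"
  proof (rule ccontr)
    assume "cnj (ph q1 \<sigma> \<tau>1 q \<omega>) * ph q2 \<sigma> \<tau>2 q \<omega> \<noteq> 0"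
    then have "okw T \<tau>1 \<omega>" "okw T \<tau>2 \<omega>" using ph_ok assms q ol by auto
    then have a: "\<omega> \<in> Z0T_star T" "\<omega> \<in> lists (Some ` T)" using inv by (auto simp: okw_def)
    then have "\<omega> \<noteq> []" "hd \<omega> = None" by (auto simp: Z0T_star_def)
    then show False using a(2) by (cases \<omega>) auto
  qed
qed

lemma R4a_zero:
  assumes "q1 \<in> Q" "q2 \<in> Q" "\<sigma> \<in> gamma_set Sig" "\<tau>1 \<in> delta_set T" "\<tau>2 \<in> delta_set T" "\<tau>3 \<in> delta_set T"
    and inv: "\<not> (\<tau>1 \<noteq> None \<and> ((\<tau>3 = None \<and> \<tau>2 = None) \<or> (\<tau>3 \<noteq> None \<and> \<tau>2 \<noteq> None)))"
  shows "E4a q1 q2 \<sigma> \<tau>1 \<tau>2 \<tau>3 = 0"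
proof -
  have "(\<Sum>q\<in>Q. HH ([] @ [\<tau>3]) [] (ph q1 \<sigma> \<tau>1 q) (ph q2 \<sigma> \<tau>2 q)) = 0"
  proof (intro sum.neutral ballI)
    fix q assume q: "q \<in> Q"
    have z1: "cnj (ph q1 \<sigma> \<tau>1 q []) * ph q2 \<sigma> \<tau>2 q [\<tau>3] = 0"
    proof (rule ccontr)
      assume "cnj (ph q1 \<sigma> \<tau>1 q []) * ph q2 \<sigma> \<tau>2 q [\<tau>3] \<noteq> 0"
      then have "okw T \<tau>1 []" "okw T \<tau>2 [\<tau>3]" using ph_ok assms q by auto
      then show False using inv by (cases \<tau>2; cases \<tau>3; auto simp: okw_Nil okw_single okw_pair)
    qed
    have z2: "cnj (ph q1 \<sigma> \<tau>1 q [\<tau>]) * ph q2 \<sigma> \<tau>2 q [\<tau>3, \<tau>] = 0" if t: "\<tau> \<in> delta_set T" for \<tau>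
    proof (rule ccontr)
      assume "cnj (ph q1 \<sigma> \<tau>1 q [\<tau>]) * ph q2 \<sigma> \<tau>2 q [\<tau>3, \<tau>] \<noteq> 0"
      then have "okw T \<tau>1 [\<tau>]" "okw T \<tau>2 [\<tau>3, \<tau>]" using ph_ok assms q t by auto
      then show False using inv by (cases \<tau>2; cases \<tau>3; auto simp: okw_Nil okw_single okw_pair)
    qed
    have s2: "(\<Sum>\<tau>\<in>delta_set T. cnj (ph q1 \<sigma> \<tau>1 q [\<tau>]) * ph q2 \<sigma> \<tau>2 q [\<tau>3, \<tau>]) = 0"
      by (rule sum.neutral) (use z2 in blast)
    show "HH ([] @ [\<tau>3]) [] (ph q1 \<sigma> \<tau>1 q) (ph q2 \<sigma> \<tau>2 q) = 0"
      unfolding HH_1[OF assms(6)] s2 z1 by simp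
  qed
  then show ?thesis using E4a_HH[OF assms(6), of "[]"] by simp
qed

lemma R4b_zero:
  assumes "q1 \<in> Q" "q2 \<in> Q" "\<sigma> \<in> gamma_set Sig" "\<tau>1 \<in> delta_set T" "\<tau>2 \<in> delta_set T" "\<tau>3 \<in> delta_set T"
    and inv: "\<not> (\<tau>1 \<noteq> None \<and> \<tau>3 \<noteq> None)"
  shows "E4b q1 q2 \<sigma> \<tau>1 \<tau>2 \<tau>3 = 0"
  unfolding E4b_def
proof (intro sum.neutral ballI)
  fix q assume q: "q \<in> Q"
  show "cnj (ph q1 \<sigma> \<tau>1 q []) * ph q2 \<sigma> \<tau>2 q [\<tau>2, \<tau>3] = 0"
  proof (rule ccontr)
    assume "cnj (ph q1 \<sigma> \<tau>1 q []) * ph q2 \<sigma> \<tau>2 q [\<tau>2, \<tau>3] \<noteq> 0"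
    then have "okw T \<tau>1 []" "okw T \<tau>2 [\<tau>2, \<tau>3]" using ph_ok assms q by auto
    then show False using inv by (cases \<tau>2; cases \<tau>3; auto simp: okw_Nil okw_single okw_pair)
  qed
qed

lemma R4b_other:
  assumes "q2 \<in> Q" "\<sigma> \<in> gamma_set Sig" "\<tau>2 \<in> delta_set T" "t \<in> delta_set T" "u \<in> delta_set T" "t \<noteq> \<tau>2"
  shows "(\<Sum>q\<in>Q. cnj (ph q1 \<sigma> \<tau>1 q []) * ph q2 \<sigma> \<tau>2 q [t,u]) = 0"
proof (intro sum.neutral ballI)
  fix q assume q: "q \<in> Q"
  have "ph q2 \<sigma> \<tau>2 q [t,u] = 0"
    by (rule ph_zero) (use assms q in \<open>auto simp: okw_def\<close>)
  then show "cnj (ph q1 \<sigma> \<tau>1 q []) * ph q2 \<sigma> \<tau>2 q [t,u] = 0" by simp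
qed

lemma exists_pos: "\<sigma> \<in> gamma_set Sig \<Longrightarrow> \<exists>w p. w \<in> lists Sig \<and> p < length w + 2 \<and> tape w ! p = \<sigma>"
proof -
  assume "\<sigma> \<in> gamma_set Sig"
  then consider "\<sigma> = LEnd" | "\<sigma> = REnd" | x where "\<sigma> = Inp x" "x \<in> Sig" by (auto simp: gamma_set_def)
  then show ?thesis
  proof cases
    case 1 then show ?thesis by (intro exI[of _ "[]"] exI[of _ 0]) (simp add: tape_def)
  next
    case 2 then show ?thesis by (intro exI[of _ "[]"] exI[of _ 1]) (simp add: tape_def)
  next
    case 3 then show ?thesis by (intro exI[of _ "[x]"] exI[of _ 1]) (simp add: tape_def)
  qed
qed

end

context qctx begin

lemma rows_on_GG: "fm.rows_on \<longleftrightarrow> (\<forall>c1\<in>CC. \<forall>c2\<in>CC. GG c1 c2 = (if c1 = c2 then 1 else 0))"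
  unfolding fm.rows_on_def GG_def ..

lemma conf_split:
  assumes "(w,p,q,s) \<in> CC"
  shows "s = butlast s @ [last s]" "set s \<subseteq> delta_set T"
  using conf_props[OF assms] stack_elems by auto

lemma row_gt:
  assumes R4: R4 and c1: "(w,p,q1,s1) \<in> CC" and c2: "(w,p,q2,s2) \<in> CC" and l: "length s2 < length s1"
  shows "GG (w,p,q1,s1) (w,p,q2,s2) = 0"
proof -
  note cp1 = conf_props[OF c1] and cp2 = conf_props[OF c2]
  note cs1 = conf_split[OF c1] and cs2 = conf_split[OF c2]
  define \<sigma> where "\<sigma> = tape w ! p"
  have G: "GG (w,p,q1,s1) (w,p,q2,s2) = (\<Sum>q\<in>Q. HH (butlast s1) (butlast s2) (ph q1 \<sigma> (last s1) q) (ph q2 \<sigma> (last s2) q))"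
    unfolding row_same[OF c1 c2] \<sigma>_def ..
  have lb: "length (butlast s2) < length (butlast s1)" using l cp1(7) cp2(7) by (cases s1; cases s2) auto
  have inb: "set (butlast s1) \<subseteq> delta_set T" using cs1(2) by (auto dest: in_set_butlastD)
  show ?thesis
  proof (cases "\<exists>t. butlast s1 = butlast s2 @ [t]")
    case True
    then obtain t where t: "butlast s1 = butlast s2 @ [t]" by blast
    have tD: "t \<in> delta_set T" using inb t by auto
    have "E4a q1 q2 \<sigma> (last s1) (last s2) t = 0"
      using R4 cp1(3,5,6) cp2(3,6) tD unfolding R4_def \<sigma>_def by blast
    then show ?thesis unfolding G t E4a_HH[OF tD] .
  next
    case F1: False
    show ?thesis
    proof (cases "\<exists>t u. butlast s1 = butlast s2 @ [t,u]")
      case True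
      then obtain t u where t: "butlast s1 = butlast s2 @ [t,u]" by blast
      have tD: "t \<in> delta_set T" "u \<in> delta_set T" using inb t by auto
      show ?thesis unfolding G t E4b_HH[OF tD]
      proof (cases "t = last s2")
        case True
        have "E4b q1 q2 \<sigma> (last s1) (last s2) u = 0"
          using R4 cp1(3,5,6) cp2(3,6) tD unfolding R4_def \<sigma>_def by blast
        then show "(\<Sum>q\<in>Q. cnj (ph q1 \<sigma> (last s1) q []) * ph q2 \<sigma> (last s2) q [t, u]) = 0"
          using True by (simp add: E4b_def)
      next
        case False
        show "(\<Sum>q\<in>Q. cnj (ph q1 \<sigma> (last s1) q []) * ph q2 \<sigma> (last s2) q [t, u]) = 0"
          unfolding \<sigma>_def by (rule R4b_other[OF cp2(3) cp1(5) cp2(6) tD False])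
      qed
    next
      case F2: False
      have "HH (butlast s1) (butlast s2) (ph q1 \<sigma> (last s1) q) (ph q2 \<sigma> (last s2) q) = 0" for q
      proof (rule HH_none)
        fix o1 o2 assume o: "o1 \<in> LL" "o2 \<in> LL"
        show "butlast s1 @ o1 \<noteq> butlast s2 @ o2"
        proof
          assume e: "butlast s1 @ o1 = butlast s2 @ o2"
          have "length o1 \<le> 2" "length o2 \<le> 2" using o by (auto simp: LL_def)
          from match_cases[OF e this]
          have "length (butlast s1) \<le> length (butlast s2) \<or> (\<exists>t. butlast s1 = butlast s2 @ [t]) \<or> (\<exists>t u. butlast s1 = butlast s2 @ [t,u])"
            by (auto dest!: arg_cong[where f=length] simp del: length_butlast)
          then show False using F1 F2 lb by (meson not_le)
        qed
      qed
      then show ?thesis unfolding G by simp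
    qed
  qed
qed

lemma rows_from_R:
  assumes R1: R1 and R2: R2 and R4: R4
  shows fm.rows_on
  unfolding rows_on_GG
proof (intro ballI)
  fix c1 c2 assume c1: "c1 \<in> CC" and c2: "c2 \<in> CC"
  obtain w1 p1 q1 s1 where cc1: "c1 = (w1,p1,q1,s1)" by (cases c1) auto
  obtain w2 p2 q2 s2 where cc2: "c2 = (w2,p2,q2,s2)" by (cases c2) auto
  show "GG c1 c2 = (if c1 = c2 then 1 else 0)"
  proof (cases "(w1,p1) = (w2,p2)")
    case False
    then show ?thesis using row_diff c1 c2 unfolding cc1 cc2 by auto
  next
    case True
    then have ww: "w2 = w1" "p2 = p1" by auto
    note c1' = c1[unfolded cc1] and c2' = c2[unfolded cc2 ww]
    note cp1 = conf_props[OF c1'] and cp2 = conf_props[OF c2']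
    note cs1 = conf_split[OF c1'] and cs2 = conf_split[OF c2']
    consider "length s2 < length s1" | "length s1 < length s2" | "length s1 = length s2" by linarith
    then show ?thesis
    proof cases
      case 1
      then have "c1 \<noteq> c2" using cc1 cc2 by auto
      then show ?thesis using row_gt[OF R4 c1' c2' 1] unfolding cc1 cc2 ww by auto
    next
      case 2
      then have "c1 \<noteq> c2" using cc1 cc2 by auto
      have "GG (w1,p1,q1,s1) (w1,p1,q2,s2) = cnj (GG (w1,p1,q2,s2) (w1,p1,q1,s1))" by (rule GG_sym)
      then show ?thesis using row_gt[OF R4 c2' c1' 2] \<open>c1 \<noteq> c2\<close> unfolding cc1 cc2 ww by simp
    next
      case 3
      define \<sigma> where "\<sigma> = tape w1 ! p1"
      have G: "GG c1 c2 = (\<Sum>q\<in>Q. HH (butlast s1) (butlast s2) (ph q1 \<sigma> (last s1) q) (ph q2 \<sigma> (last s2) q))"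
        unfolding cc1 cc2 ww row_same[OF c1' c2'] \<sigma>_def ..
      show ?thesis
      proof (cases "butlast s1 = butlast s2")
        case False
        have "HH (butlast s1) (butlast s2) (ph q1 \<sigma> (last s1) q) (ph q2 \<sigma> (last s2) q) = 0" for q
        proof (rule HH_none)
          fix o1 o2 assume o: "o1 \<in> LL" "o2 \<in> LL"
          show "butlast s1 @ o1 \<noteq> butlast s2 @ o2"
            using False 3 by (auto simp: append_eq_append_conv)
        qed
        moreover have "c1 \<noteq> c2" using False cc1 cc2 by auto
        ultimately show ?thesis unfolding G by simp
      next
        case bEq: True
        have G0: "GG c1 c2 = P0 q1 q2 \<sigma> (last s1) (last s2)" unfolding G bEq HH_P0 ..
        show ?thesis
        proof (cases "(q1, last s1) = (q2, last s2)")
          case True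
          then have "s1 = s2" "q1 = q2" using bEq cs1(1) cs2(1) by auto
          then have "c1 = c2" using cc1 cc2 ww by simp
          moreover have "P0 q1 q2 \<sigma> (last s1) (last s2) = 1"
          proof -
            have "infsum (\<lambda>(q, \<omega>). (cmod (ph q1 \<sigma> (last s1) q \<omega>))\<^sup>2) (Q \<times> lists (delta_set T)) = 1"
              using R1 cp1(3,5,6) unfolding R1_def \<sigma>_def by blast
            then show ?thesis using P0_norm[of q1 \<sigma> "last s1"] cp1(3,5,6) True unfolding \<sigma>_def by auto
          qed
          ultimately show ?thesis using G0 by simp
        next
          case False
          then have "c1 \<noteq> c2" using cc1 cc2 ww by auto
          moreover have "P0 q1 q2 \<sigma> (last s1) (last s2) = 0"
          proof -
            have "infsum (\<lambda>(q, \<omega>). cnj (ph q1 \<sigma> (last s1) q \<omega>) * ph q2 \<sigma> (last s2) q \<omega>) (Q \<times> lists (delta_set T)) = 0"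
              using R2 cp1(3,5,6) cp2(3,6) False unfolding R2_def \<sigma>_def by blast
            then show ?thesis using P0_formal[of q1 \<sigma> "last s1" q2 "last s2"] cp1(3,5,6) unfolding \<sigma>_def by simp
          qed
          ultimately show ?thesis using G0 by simp
        qed
      qed
    qed
  qed
qed

end

lemma D_Some: "\<tau> \<in> delta_set T \<Longrightarrow> \<tau> \<noteq> None \<Longrightarrow> \<tau> \<in> Some ` T"
  by (auto simp: delta_set_def)

context qctx begin

definition "stk \<tau> = (if \<tau> = None then [None] else [None, \<tau>])"

lemma stk_props:
  assumes "\<tau> \<in> delta_set T"
  shows "stk \<tau> \<in> Z0T_star T" "last (stk \<tau>) = \<tau>" "butlast (stk \<tau>) = (if \<tau> = None then [] else [None])"
  using D_Some[OF assms] by (auto simp: stk_def Z0T_star_def)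

lemma conf_mk:
  assumes "w \<in> lists Sig" "p < length w + 2" "q \<in> Q" "s \<in> Z0T_star T"
  shows "(w,p,q,s) \<in> CC"
  using assms by (simp add: configs_def)

lemma R_from_rows:
  assumes rows: fm.rows_on
  shows R1 R2 R4
proof -
  have GGc: "GG c1 c2 = (if c1 = c2 then 1 else 0)" if "c1 \<in> CC" "c2 \<in> CC" for c1 c2
    using rows that unfolding rows_on_GG by blast
  show R1 unfolding R1_def
  proof (intro ballI)
    fix q1 \<sigma>1 \<tau>1 assume q1: "q1 \<in> Q" and s: "\<sigma>1 \<in> gamma_set Sig" and t1: "\<tau>1 \<in> delta_set T"
    obtain w p where wp: "w \<in> lists Sig" "p < length w + 2" "tape w ! p = \<sigma>1" using exists_pos[OF s] by blast
    have c: "(w,p,q1,stk \<tau>1) \<in> CC" using conf_mk[OF wp(1,2) q1 stk_props(1)[OF t1]] .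
    have "P0 q1 q1 \<sigma>1 \<tau>1 \<tau>1 = GG (w,p,q1,stk \<tau>1) (w,p,q1,stk \<tau>1)"
      unfolding row_same[OF c c] HH_P0 stk_props(2)[OF t1] wp(3) ..
    also have "\<dots> = 1" using GGc[OF c c] by simp
    finally have "of_real (infsum (\<lambda>(q, \<omega>). (cmod (ph q1 \<sigma>1 \<tau>1 q \<omega>))\<^sup>2) (Q \<times> lists (delta_set T))) = (1::complex)"
      using P0_norm[OF q1 s t1] by simp
    then show "infsum (\<lambda>(q, \<omega>). (cmod (ph q1 \<sigma>1 \<tau>1 q \<omega>))\<^sup>2) (Q \<times> lists (delta_set T)) = 1"
      by (metis of_real_eq_1_iff)
  qed
  show R2 unfolding R2_def
  proof (intro ballI impI)
    fix q1 q2 \<sigma>1 \<tau>1 \<tau>2 assume q: "q1 \<in> Q" "q2 \<in> Q" and s: "\<sigma>1 \<in> gamma_set Sig"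
      and t: "\<tau>1 \<in> delta_set T" "\<tau>2 \<in> delta_set T" and ne: "(q1, \<tau>1) \<noteq> (q2, \<tau>2)"
    have "P0 q1 q2 \<sigma>1 \<tau>1 \<tau>2 = 0"
    proof (cases "(\<tau>1 = None) = (\<tau>2 = None)")
      case False
      then show ?thesis using R2_zero q s t by blast
    next
      case True
      obtain w p where wp: "w \<in> lists Sig" "p < length w + 2" "tape w ! p = \<sigma>1" using exists_pos[OF s] by blast
      have c1: "(w,p,q1,stk \<tau>1) \<in> CC" using conf_mk[OF wp(1,2) q(1) stk_props(1)[OF t(1)]] .
      have c2: "(w,p,q2,stk \<tau>2) \<in> CC" using conf_mk[OF wp(1,2) q(2) stk_props(1)[OF t(2)]] .
      have b: "butlast (stk \<tau>1) = butlast (stk \<tau>2)" using True stk_props(3) t by simp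
      have "(w,p,q1,stk \<tau>1) \<noteq> (w,p,q2,stk \<tau>2)"
      proof
        assume "(w,p,q1,stk \<tau>1) = (w,p,q2,stk \<tau>2)"
        then have "q1 = q2" "last (stk \<tau>1) = last (stk \<tau>2)" by auto
        then show False using ne stk_props(2)[OF t(1)] stk_props(2)[OF t(2)] by simp
      qed
      then have "GG (w,p,q1,stk \<tau>1) (w,p,q2,stk \<tau>2) = 0" using GGc[OF c1 c2] by simp
      moreover have "GG (w,p,q1,stk \<tau>1) (w,p,q2,stk \<tau>2) = P0 q1 q2 \<sigma>1 \<tau>1 \<tau>2"
        unfolding row_same[OF c1 c2] b HH_P0 stk_props(2)[OF t(1)] stk_props(2)[OF t(2)] wp(3) ..
      ultimately show ?thesis by simp
    qed
    then show "infsum (\<lambda>(q, \<omega>). cnj (ph q1 \<sigma>1 \<tau>1 q \<omega>) * ph q2 \<sigma>1 \<tau>2 q \<omega>) (Q \<times> lists (delta_set T)) = 0"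
      using P0_formal[OF q(1) s t(1)] by simp
  qed
  show R4 unfolding R4_def
  proof (intro ballI conjI)
    fix q1 q2 \<sigma>1 \<tau>1 \<tau>2 \<tau>3 assume q: "q1 \<in> Q" "q2 \<in> Q" and s: "\<sigma>1 \<in> gamma_set Sig"
      and t: "\<tau>1 \<in> delta_set T" "\<tau>2 \<in> delta_set T" "\<tau>3 \<in> delta_set T"
    obtain w p where wp: "w \<in> lists Sig" "p < length w + 2" "tape w ! p = \<sigma>1" using exists_pos[OF s] by blast
    have S: "\<tau> \<in> Some ` T" if "\<tau> \<in> delta_set T" "\<tau> \<noteq> None" for \<tau> using D_Some that .
    show "E4a q1 q2 \<sigma>1 \<tau>1 \<tau>2 \<tau>3 = 0"
    proof (cases "\<tau>1 \<noteq> None \<and> ((\<tau>3 = None \<and> \<tau>2 = None) \<or> (\<tau>3 \<noteq> None \<and> \<tau>2 \<noteq> None))")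
      case False
      then show ?thesis using R4a_zero q s t by blast
    next
      case True
      define b where "b = (if \<tau>3 = None then [] else [None :: 't option])"
      have z1: "b @ [\<tau>3, \<tau>1] \<in> Z0T_star T" "b @ [\<tau>2] \<in> Z0T_star T"
        using True S t by (auto simp: b_def Z0T_star_def)
      have c1: "(w,p,q1,b @ [\<tau>3, \<tau>1]) \<in> CC" using conf_mk[OF wp(1,2) q(1) z1(1)] .
      have c2: "(w,p,q2,b @ [\<tau>2]) \<in> CC" using conf_mk[OF wp(1,2) q(2) z1(2)] .
      have "(w,p,q1,b @ [\<tau>3, \<tau>1]) \<noteq> (w,p,q2,b @ [\<tau>2])" by simp
      then have "GG (w,p,q1,b @ [\<tau>3, \<tau>1]) (w,p,q2,b @ [\<tau>2]) = 0" using GGc[OF c1 c2] by simp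
      moreover have "GG (w,p,q1,b @ [\<tau>3, \<tau>1]) (w,p,q2,b @ [\<tau>2]) = E4a q1 q2 \<sigma>1 \<tau>1 \<tau>2 \<tau>3"
        unfolding row_same[OF c1 c2] wp(3) using E4a_HH[OF t(3), of b q1 \<sigma>1 \<tau>1 q2 \<tau>2]
        by (simp add: butlast_append)
      ultimately show ?thesis by simp
    qed
    show "E4b q1 q2 \<sigma>1 \<tau>1 \<tau>2 \<tau>3 = 0"
    proof (cases "\<tau>1 \<noteq> None \<and> \<tau>3 \<noteq> None")
      case False
      then show ?thesis using R4b_zero q s t by blast
    next
      case True
      define b where "b = (if \<tau>2 = None then [] else [None :: 't option])"
      have z1: "b @ [\<tau>2, \<tau>3, \<tau>1] \<in> Z0T_star T" "b @ [\<tau>2] \<in> Z0T_star T"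
        using True S t by (auto simp: b_def Z0T_star_def)
      have c1: "(w,p,q1,b @ [\<tau>2, \<tau>3, \<tau>1]) \<in> CC" using conf_mk[OF wp(1,2) q(1) z1(1)] .
      have c2: "(w,p,q2,b @ [\<tau>2]) \<in> CC" using conf_mk[OF wp(1,2) q(2) z1(2)] .
      have "(w,p,q1,b @ [\<tau>2, \<tau>3, \<tau>1]) \<noteq> (w,p,q2,b @ [\<tau>2])" by simp
      then have "GG (w,p,q1,b @ [\<tau>2, \<tau>3, \<tau>1]) (w,p,q2,b @ [\<tau>2]) = 0" using GGc[OF c1 c2] by simp
      moreover have "GG (w,p,q1,b @ [\<tau>2, \<tau>3, \<tau>1]) (w,p,q2,b @ [\<tau>2]) = E4b q1 q2 \<sigma>1 \<tau>1 \<tau>2 \<tau>3"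
        unfolding row_same[OF c1 c2] wp(3) E4b_def using E4b_HH[OF t(2) t(3), of b q1 \<sigma>1 \<tau>1 q2 \<tau>2]
        by (simp add: butlast_append)
      ultimately show ?thesis by simp
    qed
  qed
qed

lemma rows_iff: "fm.rows_on \<longleftrightarrow> R1 \<and> R2 \<and> R4"
  using R_from_rows rows_from_R by blast

end

lemma Z0T_snoc: "s \<in> Z0T_star T \<Longrightarrow> \<tau> \<in> Some ` T \<Longrightarrow> s @ [\<tau>] \<in> Z0T_star T"
  by (cases s) (auto simp: Z0T_star_def)

lemma Z0T_butlast: "s \<in> Z0T_star T \<Longrightarrow> 2 \<le> length s \<Longrightarrow> butlast s \<in> Z0T_star T"
  by (cases s) (auto simp: Z0T_star_def dest: in_set_butlastD)

lemma Z0T_last_Some: "s \<in> Z0T_star T \<Longrightarrow> 2 \<le> length s \<Longrightarrow> last s \<in> Some ` T"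
  by (cases s) (auto simp: Z0T_star_def)

lemma Z0T_len1: "s \<in> Z0T_star T \<Longrightarrow> length s < 2 \<Longrightarrow> s = [None]"
  by (cases s) (auto simp: Z0T_star_def)

lemma two_split: "2 \<le> length s \<Longrightarrow> s = butlast (butlast s) @ [last (butlast s), last s]"
proof -
  assume l: "2 \<le> length s"
  then have "length (butlast s) \<ge> 1" by simp
  then have "s \<noteq> []" "butlast s \<noteq> []" by (auto simp del: length_butlast)
  then show ?thesis by (metis append_butlast_last_id append_Cons append_Nil append_assoc)
qed

lemma suffix1: "s = b @ \<omega> \<Longrightarrow> length \<omega> = 1 \<Longrightarrow> \<omega> = [last s]"
  by (cases \<omega>) auto

lemma suffix2: "s = b @ \<omega> \<Longrightarrow> length \<omega> = 2 \<Longrightarrow> \<omega> = [last (butlast s), last s]"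
proof -
  assume s: "s = b @ \<omega>" and l: "length \<omega> = 2"
  then obtain x y where "\<omega> = [x,y]" by (auto simp: length_Suc_conv numeral_2_eq_2)
  then show ?thesis using s by (simp add: butlast_append)
qed

definition mt :: "'t option list \<Rightarrow> 't option \<Rightarrow> 't option \<Rightarrow> bool" where
  "mt s' \<tau>1 \<tau>2 \<longleftrightarrow> (s' = [None] \<and> \<tau>2 = None) \<or> (2 \<le> length s' \<and> last s' = \<tau>2 \<and> last (butlast s') = \<tau>1)"

context qctx begin

lemma N_facts:
  assumes s': "s' \<in> Z0T_star T" and m: "mt s' \<tau>1 \<tau>2" and ok: "okw T \<tau> \<omega>" and \<tau>: "\<tau> \<in> delta_set T"
    and W: "\<omega> \<in> {[], [\<tau>2], [\<tau>1,\<tau>2]}"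
  shows "\<exists>b. s' = b @ \<omega> \<and> b @ [\<tau>] \<in> Z0T_star T"
proof -
  consider "\<omega> = []" | "\<omega> = [\<tau>2]" | "\<omega> = [\<tau>1,\<tau>2]" using W by blast
  then show ?thesis
  proof cases
    case 1
    then have "\<tau> \<in> Some ` T" using ok \<tau> D_Some by (simp add: okw_Nil)
    then show ?thesis using 1 Z0T_snoc[OF s'] by auto
  next
    case 2
    show ?thesis
    proof (cases "s' = [None] \<and> \<tau>2 = None")
      case True
      then have "\<tau> = None" using ok 2 by (auto simp: okw_single)
      then show ?thesis using True 2 by (intro exI[of _ "[]"]) (simp add: Z0T_star_def)
    next
      case False
      then have l: "2 \<le> length s'" "last s' = \<tau>2" using m by (auto simp: mt_def)
      have "\<tau>2 \<in> Some ` T" using Z0T_last_Some[OF s' l(1)] l(2) by simp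
      then have "\<tau> \<noteq> None" using ok 2 by (auto simp: okw_single)
      then have tS: "\<tau> \<in> Some ` T" using D_Some \<tau> by blast
      have "s' = butlast s' @ [\<tau>2]" using l by (metis append_butlast_last_id list.size(3) not_numeral_le_zero)
      then show ?thesis using 2 Z0T_snoc[OF Z0T_butlast[OF s' l(1)] tS] by blast
    qed
  next
    case 3
    have t: "\<tau>1 = \<tau>" "\<tau>2 \<in> Some ` T" using ok 3 by (auto simp: okw_pair)
    then have l: "2 \<le> length s'" "last s' = \<tau>2" "last (butlast s') = \<tau>1" using m by (auto simp: mt_def)
    have e: "s' = butlast (butlast s') @ [\<tau>1, \<tau>2]" using two_split[OF l(1)] l(2,3) by simp
    have "butlast (butlast s') @ [\<tau>] = butlast s'"
      using e t(1) by (metis append_assoc append_Cons append_Nil butlast_snoc)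
    then show ?thesis using e 3 Z0T_butlast[OF s' l(1)] by auto
  qed
qed

lemma col_match:
  assumes c': "(w,p',q1,s') \<in> CC" and m: "mt s' \<tau>1 \<tau>2" and t: "\<tau>1 \<in> delta_set T" "\<tau>2 \<in> delta_set T"
  shows "infsum (\<lambda>c. (cmod (amp c (w,p',q1,s')))\<^sup>2) CC
     = infsum (\<lambda>(q,\<tau>,\<omega>). (cmod (ph q (tape w ! predp w p' (D q1)) \<tau> q1 \<omega>))\<^sup>2) (Q \<times> delta_set T \<times> {[], [\<tau>2], [\<tau>1,\<tau>2]})"
proof -
  note cp = conf_props[OF c']
  define pp where "pp = predp w p' (D q1)"
  define \<sigma> where "\<sigma> = tape w ! pp"
  define W where "W = {[], [\<tau>2], [\<tau>1,\<tau>2]}"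
  define c0 where "c0 = (w,p',q1,s')"
  define Pre where "Pre = {c \<in> CC. amp c c0 \<noteq> 0}"
  define N where "N = {x \<in> Q \<times> delta_set T \<times> W. ph (fst x) \<sigma> (fst (snd x)) q1 (snd (snd x)) \<noteq> 0}"
  define h where "h = (\<lambda>(q,\<tau>,\<omega>). (cmod (ph q \<sigma> \<tau> q1 \<omega>))\<^sup>2)"
  define i where "i = (\<lambda>(q::'q,\<tau>::'t option,\<omega>::'t option list). (w, pp, q, take (length s' - length \<omega>) s' @ [\<tau>]))"
  define j where "j = (\<lambda>(w0::'a list, pc::nat, q::'q, s::'t option list). (q, last s, drop (length s - 1) s'))"
  have ppl: "pp < length w + 2" using predp_lt[OF cp(2)] by (simp add: pp_def)
  have \<sigma>G: "\<sigma> \<in> gamma_set Sig" using tape_mem[OF cp(1) ppl] by (simp add: \<sigma>_def)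
  have Wl: "W \<subseteq> lists (delta_set T)" using t by (auto simp: W_def)
  have finW: "finite W" by (simp add: W_def)
  have PreF: "finite Pre" using fm.colfin[OF c'] by (simp add: Pre_def c0_def)
  have lhs: "infsum (\<lambda>c. (cmod (amp c c0))\<^sup>2) CC = (\<Sum>c\<in>Pre. (cmod (amp c c0))\<^sup>2)"
    by (rule infsum_fin_supp) (use PreF in \<open>auto simp: Pre_def\<close>)
  have rhs: "infsum h (Q \<times> delta_set T \<times> W) = sum h N"
  proof -
    have "infsum h (Q \<times> delta_set T \<times> W) = sum h (Q \<times> delta_set T \<times> W)"
      using finQ finD finW by simp
    also have "\<dots> = sum h N"
      by (rule sum.mono_neutral_right) (use finQ finD finW in \<open>auto simp: N_def h_def\<close>)
    finally show ?thesis .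
  qed
  have main: "(\<Sum>c\<in>Pre. (cmod (amp c c0))\<^sup>2) = sum h N"
  proof (rule sum.reindex_bij_witness[where i=i and j=j])
    fix c assume c: "c \<in> Pre"
    then have cC: "c \<in> CC" and nz: "amp c c0 \<noteq> 0" by (auto simp: Pre_def)
    obtain k where k: "k \<in> KS" "c0 = img c k" "amp c c0 = coef c k" using amp_cases[OF cC nz] by blast
    obtain w0 pc q s where cc: "c = (w0,pc,q,s)" by (cases c) auto
    obtain q1' \<omega> where kk: "k = (q1',\<omega>)" by (cases k) auto
    note cpc = conf_props[OF cC[unfolded cc]]
    have eqs: "w0 = w" "q1' = q1" "s' = butlast s @ \<omega>" "move w pc (D q1) = p'"
      using k(2) by (auto simp: c0_def cc kk)
    have pc: "pc = pp" using move_eq_iff[of pc w p' "D q1"] eqs cpc(2) cp(2) by (simp add: pp_def)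
    have \<omega>L: "\<omega> \<in> LL" using k(1) by (simp add: kk KS_def)
    have ampv: "amp c c0 = ph q \<sigma> (last s) q1 \<omega>" using k(3) by (simp add: cc kk eqs pc \<sigma>_def)
    have jc: "j c = (q, last s, \<omega>)" using eqs(3) cpc(7) by (simp add: j_def cc)
    have \<omega>W: "\<omega> \<in> W"
    proof -
      have "length \<omega> \<le> 2" using \<omega>L by (simp add: LL_def)
      then consider "length \<omega> = 0" | "length \<omega> = 1" | "length \<omega> = 2" by linarith
      then show ?thesis
      proof cases
        case 1 then show ?thesis by (simp add: W_def)
      next
        case 2
        then have "\<omega> = [last s']" using suffix1[OF eqs(3)] by simp
        moreover have "last s' = \<tau>2" using m by (auto simp: mt_def)
        ultimately show ?thesis by (simp add: W_def)
      next
        case 3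
        then have "\<omega> = [last (butlast s'), last s']" using suffix2[OF eqs(3)] by simp
        moreover have "2 \<le> length s'" using eqs(3) 3 by simp
        then have "last s' = \<tau>2" "last (butlast s') = \<tau>1" using m by (auto simp: mt_def)
        ultimately show ?thesis by (simp add: W_def)
      qed
    qed
    show "j c \<in> N" unfolding jc N_def using cpc(3) cpc(6) \<omega>W nz ampv by simp
    show "i (j c) = c" unfolding jc using eqs pc cpc(7) by (simp add: i_def cc)
    show "h (j c) = (cmod (amp c c0))\<^sup>2" unfolding jc ampv by (simp add: h_def)
  next
    fix x assume x: "x \<in> N"
    obtain q \<tau> \<omega> where xx: "x = (q,\<tau>,\<omega>)" by (cases x) auto
    have q: "q \<in> Q" "\<tau> \<in> delta_set T" "\<omega> \<in> W" and nz: "ph q \<sigma> \<tau> q1 \<omega> \<noteq> 0"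
      using x by (auto simp: N_def xx)
    have \<omega>l: "\<omega> \<in> lists (delta_set T)" using q(3) Wl by auto
    have ok: "okw T \<tau> \<omega>" using ph_ok[OF q(1) \<sigma>G q(2) cp(3) \<omega>l nz] .
    obtain b where b: "s' = b @ \<omega>" "b @ [\<tau>] \<in> Z0T_star T"
      using N_facts[OF cp(4) m ok q(2)] q(3) by (auto simp: W_def)
    have ix: "i x = (w, pp, q, b @ [\<tau>])" using b(1) by (simp add: i_def xx)
    have \<omega>L: "\<omega> \<in> LL" using ok \<omega>l by (simp add: LL_def okw_def)
    have iC: "i x \<in> CC" unfolding ix using cp(1) ppl q(1) b(2) by (simp add: configs_def)
    have img: "img (i x) (q1, \<omega>) = c0"
      using b(1) move_predp[OF cp(2)] by (simp add: ix c0_def pp_def)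
    have "amp (i x) c0 = coef (i x) (q1, \<omega>)"
      using amp_img[OF iC, of "(q1,\<omega>)"] img cp(3) \<omega>L by (simp add: KS_def)
    also have "\<dots> = ph q \<sigma> \<tau> q1 \<omega>" by (simp add: ix \<sigma>_def)
    finally have av: "amp (i x) c0 = ph q \<sigma> \<tau> q1 \<omega>" .
    show "i x \<in> Pre" using iC av nz by (simp add: Pre_def)
    show "j (i x) = x" unfolding ix using b(1) by (simp add: j_def xx)
  qed
  show ?thesis
    using lhs rhs main by (simp add: c0_def W_def h_def \<sigma>_def pp_def)
qed

end

context qctx begin

definition "R3 \<longleftrightarrow> (\<forall>q1\<in>Q. \<forall>\<sigma>1\<in>gamma_set Sig. \<forall>\<tau>1\<in>delta_set T. \<forall>\<tau>2\<in>delta_set T.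
        infsum (\<lambda>(q, \<tau>, \<omega>). (cmod (ph q \<sigma>1 \<tau> q1 \<omega>))\<^sup>2)
          (Q \<times> delta_set T \<times> {[], [\<tau>2], [\<tau>1, \<tau>2]}) = 1)"

lemma cols_iff: "fm.cols_on \<longleftrightarrow> R3"
proof
  assume cols: fm.cols_on
  show R3 unfolding R3_def
  proof (intro ballI)
    fix q1 \<sigma>1 \<tau>1 \<tau>2 assume q1: "q1 \<in> Q" and s: "\<sigma>1 \<in> gamma_set Sig"
      and t: "\<tau>1 \<in> delta_set T" "\<tau>2 \<in> delta_set T"
    obtain w p0 where wp: "w \<in> lists Sig" "p0 < length w + 2" "tape w ! p0 = \<sigma>1" using exists_pos[OF s] by blast
    define p' where "p' = move w p0 (D q1)"
    have p'l: "p' < length w + 2" using move_lt[OF wp(2)] by (simp add: p'_def)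
    have pr: "predp w p' (D q1) = p0" using move_eq_iff[OF wp(2) p'l, of "D q1"] by (simp add: p'_def)
    define s' where "s' = (if \<tau>2 = None then [None] else if \<tau>1 = None then [None, \<tau>2] else [None, \<tau>1, \<tau>2])"
    have S: "\<tau> \<in> Some ` T" if "\<tau> \<in> delta_set T" "\<tau> \<noteq> None" for \<tau> using D_Some that .
    have sZ: "s' \<in> Z0T_star T" using S t by (auto simp: s'_def Z0T_star_def)
    have m: "mt s' \<tau>1 \<tau>2" by (auto simp: s'_def mt_def)
    have c': "(w,p',q1,s') \<in> CC" using wp(1) p'l q1 sZ by (simp add: configs_def)
    have "infsum (\<lambda>c. (cmod (amp c (w,p',q1,s')))\<^sup>2) CC = 1"
      using cols c' unfolding fm.cols_on_def by blast
    then show "infsum (\<lambda>(q, \<tau>, \<omega>). (cmod (ph q \<sigma>1 \<tau> q1 \<omega>))\<^sup>2) (Q \<times> delta_set T \<times> {[], [\<tau>2], [\<tau>1, \<tau>2]}) = 1"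
      using col_match[OF c' m t] pr wp(3) by simp
  qed
next
  assume R3: R3
  show fm.cols_on unfolding fm.cols_on_def
  proof
    fix c' assume c'C: "c' \<in> CC"
    obtain w p' q1 s' where cc: "c' = (w,p',q1,s')" by (cases c') auto
    note c' = c'C[unfolded cc]
    note cp = conf_props[OF c']
    define \<tau>2 where "\<tau>2 = last s'"
    define \<tau>1 where "\<tau>1 = (if 2 \<le> length s' then last (butlast s') else None)"
    have m: "mt s' \<tau>1 \<tau>2"
    proof (cases "2 \<le> length s'")
      case True then show ?thesis by (simp add: mt_def \<tau>1_def \<tau>2_def)
    next
      case False then have "s' = [None]" using Z0T_len1[OF cp(4)] by simp
      then show ?thesis by (simp add: mt_def \<tau>2_def)
    qed
    have t2: "\<tau>2 \<in> delta_set T" using cp(6) by (simp add: \<tau>2_def)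
    have t1: "\<tau>1 \<in> delta_set T"
    proof (cases "2 \<le> length s'")
      case True
      then have "butlast s' \<noteq> []" by (cases s' rule: rev_cases) auto
      then have "last (butlast s') \<in> set s'" by (meson in_set_butlastD last_in_set)
      then show ?thesis using stack_elems[OF cp(4)] True by (simp add: \<tau>1_def)
    qed (simp add: \<tau>1_def delta_set_def)
    have sG: "tape w ! predp w p' (D q1) \<in> gamma_set Sig" using tape_mem[OF cp(1) predp_lt[OF cp(2)]] .
    have "infsum (\<lambda>(q, \<tau>, \<omega>). (cmod (ph q (tape w ! predp w p' (D q1)) \<tau> q1 \<omega>))\<^sup>2)
        (Q \<times> delta_set T \<times> {[], [\<tau>2], [\<tau>1, \<tau>2]}) = 1"
      using R3 cp(3) sG t1 t2 unfolding R3_def by blast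
    then show "infsum (\<lambda>c. (cmod (amp c c'))\<^sup>2) CC = 1" using col_match[OF c' m t1 t2] cc by simp
  qed
qed

lemma final: "unitary_on (l2 CC) (ip CC) (evol_op Q Sig T \<delta>) \<longleftrightarrow> R1 \<and> R2 \<and> R3 \<and> R4"
  unfolding evol_op_eq fm.unitary_iff rows_iff cols_iff by blast

end

theorem theorem2:
  fixes Q :: "'q set" and Sig :: "'a set" and T :: "'t set" and q0 :: 'q
    and Qa Qr :: "'q set" and \<delta> :: "('q, 'a, 't) trans" and D :: "'q \<Rightarrow> dir"
  assumes "qpa_structure Q Sig T q0 Qa Qr \<delta>"
    and "qpa_simplified Q Sig T \<delta> D"
  defines "\<phi> \<equiv> reduced_trans \<delta> D"
  shows "unitary_on (l2 (configs Q Sig T)) (ip (configs Q Sig T)) (evol_op Q Sig T \<delta>) \<longleftrightarrow>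
    ((\<forall>q1\<in>Q. \<forall>\<sigma>1\<in>gamma_set Sig. \<forall>\<tau>1\<in>delta_set T.
        infsum (\<lambda>(q, \<omega>). (cmod (\<phi> q1 \<sigma>1 \<tau>1 q \<omega>))\<^sup>2) (Q \<times> lists (delta_set T)) = 1) \<and>
     (\<forall>q1\<in>Q. \<forall>q2\<in>Q. \<forall>\<sigma>1\<in>gamma_set Sig. \<forall>\<tau>1\<in>delta_set T. \<forall>\<tau>2\<in>delta_set T.
        (q1, \<tau>1) \<noteq> (q2, \<tau>2) \<longrightarrow>
        infsum (\<lambda>(q, \<omega>). cnj (\<phi> q1 \<sigma>1 \<tau>1 q \<omega>) * \<phi> q2 \<sigma>1 \<tau>2 q \<omega>) (Q \<times> lists (delta_set T)) = 0) \<and>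
     (\<forall>q1\<in>Q. \<forall>\<sigma>1\<in>gamma_set Sig. \<forall>\<tau>1\<in>delta_set T. \<forall>\<tau>2\<in>delta_set T.
        infsum (\<lambda>(q, \<tau>, \<omega>). (cmod (\<phi> q \<sigma>1 \<tau> q1 \<omega>))\<^sup>2)
          (Q \<times> delta_set T \<times> {[], [\<tau>2], [\<tau>1, \<tau>2]}) = 1) \<and>
     (\<forall>q1\<in>Q. \<forall>q2\<in>Q. \<forall>\<sigma>1\<in>gamma_set Sig. \<forall>\<tau>1\<in>delta_set T. \<forall>\<tau>2\<in>delta_set T. \<forall>\<tau>3\<in>delta_set T.
        infsum (\<lambda>(q, \<tau>). cnj (\<phi> q1 \<sigma>1 \<tau>1 q [\<tau>]) * \<phi> q2 \<sigma>1 \<tau>2 q [\<tau>3, \<tau>]) (Q \<times> delta_set T)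
          + (\<Sum>q\<in>Q. cnj (\<phi> q1 \<sigma>1 \<tau>1 q []) * \<phi> q2 \<sigma>1 \<tau>2 q [\<tau>3]) = 0 \<and>
        (\<Sum>q\<in>Q. cnj (\<phi> q1 \<sigma>1 \<tau>1 q []) * \<phi> q2 \<sigma>1 \<tau>2 q [\<tau>2, \<tau>3]) = 0))"
proof -
  interpret qctx Q Sig T q0 Qa Qr \<delta> D using assms(1,2) by unfold_locales
  have ph: "\<phi> = ph" by (simp add: assms(3) ph_def)
  show ?thesis
    using final unfolding ph R1_def R2_def R3_def R4_def E4a_def E4b_def by blast
qed


end
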